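(* Assume that $A$ is stable (all eigenvalues have negative real part) and that $F\succeq0$ and $G\succeq0$. Then $$\operatorname{dist}\Big(D_n(\mathcal H^* ),\operatorname{Range}\begin{bmatrix}I_n\\0\end{bmatrix}\Big)<1 .$$ In other words, the choice $X_0=0$ satisfies the hypothesis $d<1$ of the convergence theorem for the subspace iteration.
   Context: Let $A\in\mathbb C^{n\times n}$ and let $F,G\in\mathbb C^{n\times n}$ be Hermitian; $M^*$ denotes the conjugate transpose and $\succeq0$ denotes Hermitian positive semidefinite. Let $\mathcal H=\begin{bmatrix}A&-F\\-G&-A^*\end{bmatrix}$. Standing assumption: $\mathcal H$ has exactly $n$ eigenvalues (counted with multiplicity) in the open left half-plane and $n$ in the open right half-plane; in particular it has no purely imaginary eigenvalues. $D_n(\mathcal H^* )$ denotes the $n$-dimensional invariant subspace of $\mathcal H^*$ associated with its eigenvalues of negative real part. For subspaces $\mathfrak S_1,\mathfrak S_2$ of equal dimension, $\operatorname{dist}(\mathfrak S_1,\mathfrak S_2)=\|P_1-P_2\|_2$, where $P_i$ is the orthogonal projector onto $\mathfrak S_i$. *)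

theory Defs
  imports "Jordan_Normal_Form.Schur_Decomposition" "Jordan_Normal_Form.Char_Poly"
begin

text \<open>Complex matrices are JNF matrices of type complex mat with explicit dimensions.\<close>

definition hermitian_mat :: "nat \<Rightarrow> complex mat \<Rightarrow> bool" where
  "hermitian_mat n F \<longleftrightarrow> F \<in> carrier_mat n n \<and> mat_adjoint F = F"

text \<open>Hermitian positive semidefinite: v^* F v \<ge> 0 for all v (real since F is Hermitian).\<close>
definition psd_mat :: "nat \<Rightarrow> complex mat \<Rightarrow> bool" where
  "psd_mat n F \<longleftrightarrow> hermitian_mat n F \<and>
     (\<forall>v \<in> carrier_vec n. Im ((F *\<^sub>v v) \<bullet>c v) = 0 \<and> 0 \<le> Re ((F *\<^sub>v v) \<bullet>c v))"

text \<open>Stable: all eigenvalues have negative real part.\<close>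
definition stable_mat :: "complex mat \<Rightarrow> bool" where
  "stable_mat A \<longleftrightarrow> (\<forall>z. eigenvalue A z \<longrightarrow> Re z < 0)"

text \<open>The Hamiltonian matrix [A, -F; -G, -A^*].\<close>
definition hamiltonian :: "complex mat \<Rightarrow> complex mat \<Rightarrow> complex mat \<Rightarrow> complex mat" where
  "hamiltonian A F G = four_block_mat A (- F) (- G) (- mat_adjoint A)"

text \<open>Number of eigenvalues (with algebraic multiplicity) satisfying P.\<close>
definition num_eigs :: "complex mat \<Rightarrow> (complex \<Rightarrow> bool) \<Rightarrow> nat" where
  "num_eigs M P = (\<Sum>z \<in> {z. eigenvalue M z \<and> P z}. order z (char_poly M))"

text \<open>Generalized eigenvector of the N x N matrix M for eigenvalue z.\<close>
definition gen_eigvec :: "nat \<Rightarrow> complex mat \<Rightarrow> complex \<Rightarrow> complex vec \<Rightarrow> bool" where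
  "gen_eigvec N M z v \<longleftrightarrow> v \<in> carrier_vec N \<and>
     (\<exists>k. ((M - z \<cdot>\<^sub>m 1\<^sub>m N) ^\<^sub>m k) *\<^sub>v v = 0\<^sub>v N)"

text \<open>Invariant subspace of M associated with the eigenvalues satisfying P:
  the span of the corresponding generalized eigenvectors (finite sums).\<close>
definition spectral_subspace :: "nat \<Rightarrow> complex mat \<Rightarrow> (complex \<Rightarrow> bool) \<Rightarrow> complex vec set" where
  "spectral_subspace N M P = {w. \<exists>vs. (\<forall>v \<in> set vs. \<exists>z. P z \<and> gen_eigvec N M z v)
       \<and> w = foldr (+) vs (0\<^sub>v N)}"

text \<open>D_n(M): invariant subspace associated with eigenvalues of negative real part.\<close>
definition D_neg :: "nat \<Rightarrow> complex mat \<Rightarrow> complex vec set" where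
  "D_neg N M = spectral_subspace N M (\<lambda>z. Re z < 0)"

definition mat_range :: "complex mat \<Rightarrow> complex vec set" where
  "mat_range M = {M *\<^sub>v x | x. x \<in> carrier_vec (dim_col M)}"

text \<open>Orthogonal projector onto S in C^N.\<close>
definition is_orth_proj :: "nat \<Rightarrow> complex vec set \<Rightarrow> complex mat \<Rightarrow> bool" where
  "is_orth_proj N S P \<longleftrightarrow> P \<in> carrier_mat N N \<and> P * P = P \<and> mat_adjoint P = P \<and> mat_range P = S"

definition orth_proj :: "nat \<Rightarrow> complex vec set \<Rightarrow> complex mat" where
  "orth_proj N S = (THE P. is_orth_proj N S P)"

definition vec_norm2 :: "complex vec \<Rightarrow> real" where
  "vec_norm2 v = sqrt (\<Sum>i<dim_vec v. (cmod (v $ i))\<^sup>2)"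

text \<open>Spectral (operator 2-) norm.\<close>
definition spec_norm :: "complex mat \<Rightarrow> real" where
  "spec_norm M = Sup {vec_norm2 (M *\<^sub>v v) | v. v \<in> carrier_vec (dim_col M) \<and> vec_norm2 v \<le> 1}"

definition subspace_dist :: "nat \<Rightarrow> complex vec set \<Rightarrow> complex vec set \<Rightarrow> real" where
  "subspace_dist N S1 S2 = spec_norm (orth_proj N S1 - orth_proj N S2)"

text \<open>The 2n x n matrix [I_n; 0].\<close>
definition top_id :: "nat \<Rightarrow> complex mat" where
  "top_id n = mat (2 * n) n (\<lambda>(i, j). if i = j then 1 else 0)"

end

theory Submission
  imports Defs "Jordan_Normal_Form.Jordan_Normal_Form_Existence" "Jordan_Normal_Form.Jordan_Normal_Form_Uniqueness"
begin

(* ---- part P1 ---- *)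


definition ip :: "complex vec \<Rightarrow> complex vec \<Rightarrow> complex" where
  "ip x y = (\<Sum>i = 0..<dim_vec x. cnj (x $ i) * y $ i)"

lemma ip_add_left: "x \<in> carrier_vec n \<Longrightarrow> y \<in> carrier_vec n \<Longrightarrow> z \<in> carrier_vec n \<Longrightarrow>
  ip (x + y) z = ip x z + ip y z"
  unfolding ip_def by (simp add: sum.distrib distrib_right)

lemma ip_add_right: "x \<in> carrier_vec n \<Longrightarrow> y \<in> carrier_vec n \<Longrightarrow> z \<in> carrier_vec n \<Longrightarrow>
  ip x (y + z) = ip x y + ip x z"
  unfolding ip_def by (simp add: sum.distrib distrib_left)

lemma ip_smult_left: "ip (c \<cdot>\<^sub>v x) y = cnj c * ip x y"
  unfolding ip_def by (simp add: sum_distrib_left mult.assoc)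

lemma ip_smult_right: "x \<in> carrier_vec n \<Longrightarrow> y \<in> carrier_vec n \<Longrightarrow> ip x (c \<cdot>\<^sub>v y) = c * ip x y"
  unfolding ip_def by (simp add: sum_distrib_left algebra_simps)

lemma ip_minus_left: "x \<in> carrier_vec n \<Longrightarrow> y \<in> carrier_vec n \<Longrightarrow> z \<in> carrier_vec n \<Longrightarrow>
  ip (x - y) z = ip x z - ip y z"
  unfolding ip_def by (simp add: sum_subtractf algebra_simps)

lemma ip_minus_right: "x \<in> carrier_vec n \<Longrightarrow> y \<in> carrier_vec n \<Longrightarrow> z \<in> carrier_vec n \<Longrightarrow>
  ip x (y - z) = ip x y - ip x z"
  unfolding ip_def by (simp add: sum_subtractf algebra_simps)

lemma ip_uminus_left: "ip (- x) z = - ip x z"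
  unfolding ip_def by (simp add: sum_negf)

lemma ip_uminus_right: "x \<in> carrier_vec n \<Longrightarrow> z \<in> carrier_vec n \<Longrightarrow> ip x (- z) = - ip x z"
  unfolding ip_def by (simp add: sum_negf)

lemma ip_zero_left[simp]: "ip (0\<^sub>v n) z = 0"
  unfolding ip_def by simp

lemma ip_zero_right[simp]: "x \<in> carrier_vec n \<Longrightarrow> ip x (0\<^sub>v n) = 0"
  unfolding ip_def by simp

lemma ip_cnj: "x \<in> carrier_vec n \<Longrightarrow> y \<in> carrier_vec n \<Longrightarrow> ip y x = cnj (ip x y)"
  unfolding ip_def cnj_sum by (simp add: mult.commute)

lemma ip_self: "ip x x = of_real (\<Sum>i = 0..<dim_vec x. (cmod (x $ i))\<^sup>2)"
  unfolding ip_def of_real_sum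
  by (rule sum.cong, simp, metis complex_norm_square mult.commute)

lemma ip_self_Re: "Re (ip x x) = (\<Sum>i = 0..<dim_vec x. (cmod (x $ i))\<^sup>2)"
  using ip_self[of x] by simp

lemma ip_self_eq_0: assumes x: "x \<in> carrier_vec n" and e: "ip x x = 0" shows "x = 0\<^sub>v n"
proof -
  have "(\<Sum>i = 0..<dim_vec x. (cmod (x $ i))\<^sup>2) = 0" using e ip_self_Re[of x] by simp
  hence "\<forall>i\<in>{0..<dim_vec x}. (cmod (x $ i))\<^sup>2 = 0"
    by (subst (asm) sum_nonneg_eq_0_iff, auto)
  thus ?thesis using x by (intro eq_vecI, auto)
qed

lemma ip_self_Im: "Im (ip x x) = 0"
  using ip_self[of x] by simp

lemma ip_append: assumes a: "a \<in> carrier_vec n1" and c: "c \<in> carrier_vec n1" and b: "b \<in> carrier_vec n2" and d: "d \<in> carrier_vec n2"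
  shows "ip (a @\<^sub>v b) (c @\<^sub>v d) = ip a c + ip b d"
proof -
  have "(\<Sum>i = 0..<n1+n2. cnj ((a @\<^sub>v b) $ i) * (c @\<^sub>v d) $ i) =
     (\<Sum>i = 0..<n1. cnj ((a @\<^sub>v b) $ i) * (c @\<^sub>v d) $ i) + (\<Sum>i = n1..<n1+n2. cnj ((a @\<^sub>v b) $ i) * (c @\<^sub>v d) $ i)"
    by (rule sum.atLeastLessThan_concat[symmetric], auto)
  also have "(\<Sum>i = 0..<n1. cnj ((a @\<^sub>v b) $ i) * (c @\<^sub>v d) $ i) = ip a c"
    unfolding ip_def using a b c d by (intro sum.cong, auto)
  also have "(\<Sum>i = n1..<n1+n2. cnj ((a @\<^sub>v b) $ i) * (c @\<^sub>v d) $ i) = (\<Sum>i = 0..<n2. cnj ((a @\<^sub>v b) $ (i+n1)) * (c @\<^sub>v d) $ (i+n1))"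
    by (rule sum.shift_bounds_nat_ivl[of _ 0 n1 n2, simplified add.commute, simplified])
  also have "\<dots> = ip b d"
    unfolding ip_def using a b c d by (intro sum.cong, auto)
  finally show ?thesis unfolding ip_def using a b by simp
qed

lemma adj_dims[simp]: fixes A :: "complex mat" shows "dim_row (mat_adjoint A) = dim_col A" "dim_col (mat_adjoint A) = dim_row A"
  unfolding mat_adjoint_def by auto

lemma adj_index[simp]: fixes A :: "complex mat" shows "i < dim_col A \<Longrightarrow> j < dim_row A \<Longrightarrow> mat_adjoint A $$ (i,j) = cnj (A $$ (j,i))"
  unfolding mat_adjoint_def by (simp add: mat_of_rows_index)

lemma adj_carrier[simp]: fixes A :: "complex mat" shows "A \<in> carrier_mat nr nc \<Longrightarrow> mat_adjoint A \<in> carrier_mat nc nr"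
  by auto

lemma adj_adj[simp]: fixes A :: "complex mat" shows "mat_adjoint (mat_adjoint A) = A"
  by (intro eq_matI, auto)

lemma ip_adj: assumes A: "A \<in> carrier_mat nr nc" and x: "x \<in> carrier_vec nr" and y: "y \<in> carrier_vec nc"
  shows "ip x (A *\<^sub>v y) = ip (mat_adjoint A *\<^sub>v x) y"
proof -
  have "ip x (A *\<^sub>v y) = (\<Sum>i = 0..<nr. cnj (x $ i) * (\<Sum>j = 0..<nc. A $$ (i,j) * y $ j))"
    unfolding ip_def using A x y by (intro sum.cong, auto simp: scalar_prod_def)
  also have "\<dots> = (\<Sum>i = 0..<nr. \<Sum>j = 0..<nc. cnj (x $ i) * A $$ (i,j) * y $ j)"
    by (simp add: sum_distrib_left mult.assoc)
  also have "\<dots> = (\<Sum>j = 0..<nc. \<Sum>i = 0..<nr. cnj (x $ i) * A $$ (i,j) * y $ j)"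
    by (rule sum.swap)
  also have "\<dots> = ip (mat_adjoint A *\<^sub>v x) y"
    unfolding ip_def using A x y 
    by (intro sum.cong, auto simp: scalar_prod_def sum_distrib_left sum_distrib_right mult.commute mult.left_commute)
  finally show ?thesis .
qed

lemma ip_sprod_c: "v \<in> carrier_vec n \<Longrightarrow> F \<in> carrier_mat n n \<Longrightarrow> (F *\<^sub>v v) \<bullet>c v = ip v (F *\<^sub>v v)"
  unfolding ip_def scalar_prod_def by (intro sum.cong, auto simp: mult.commute)

(* adjoint algebra *)
lemma adj_mult: fixes A :: "complex mat" shows "A \<in> carrier_mat nr n \<Longrightarrow> B \<in> carrier_mat n nc \<Longrightarrow>
  mat_adjoint (A * B) = mat_adjoint B * mat_adjoint A"
  by (intro eq_matI, auto simp: scalar_prod_def cnj_sum mult.commute)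

lemma adj_add: fixes A :: "complex mat" shows "A \<in> carrier_mat nr nc \<Longrightarrow> B \<in> carrier_mat nr nc \<Longrightarrow>
  mat_adjoint (A + B) = mat_adjoint A + mat_adjoint B"
  by (intro eq_matI, auto)

lemma adj_minus: fixes A :: "complex mat" shows "A \<in> carrier_mat nr nc \<Longrightarrow> B \<in> carrier_mat nr nc \<Longrightarrow>
  mat_adjoint (A - B) = mat_adjoint A - mat_adjoint B"
  by (intro eq_matI, auto)

lemma adj_uminus: fixes A :: "complex mat" shows "mat_adjoint (- A) = - mat_adjoint A"
  by (intro eq_matI, auto)

lemma adj_one[simp]: shows "mat_adjoint (1\<^sub>m n :: complex mat) = 1\<^sub>m n"
  by (intro eq_matI, auto)

lemma adj_zero[simp]: "mat_adjoint (0\<^sub>m n m :: complex mat) = 0\<^sub>m m n"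
  by (intro eq_matI, auto)

lemma adj_smult: fixes A :: "complex mat" shows "mat_adjoint (c \<cdot>\<^sub>m A) = cnj c \<cdot>\<^sub>m mat_adjoint A"
  by (intro eq_matI, auto)

lemma adj_four_block: fixes A :: "complex mat" assumes "A \<in> carrier_mat n1 m1" "B \<in> carrier_mat n1 m2" 
  "C \<in> carrier_mat n2 m1" "D \<in> carrier_mat n2 m2"
  shows "mat_adjoint (four_block_mat A B C D) = 
    four_block_mat (mat_adjoint A) (mat_adjoint C) (mat_adjoint B) (mat_adjoint D)"
  using assms by (intro eq_matI, auto)


(* ---- part P2 ---- *)


lemma smult_zero_v[simp]: "c \<cdot>\<^sub>v 0\<^sub>v n = (0\<^sub>v n :: complex vec)"
  by (intro eq_vecI, auto)

lemma mult_zero_v[simp]: "A \<in> carrier_mat nr n \<Longrightarrow> A *\<^sub>v 0\<^sub>v n = (0\<^sub>v nr :: complex vec)"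
  by (intro eq_vecI, auto)

lemma add_zero_v1[simp]: "(x :: complex vec) \<in> carrier_vec n \<Longrightarrow> 0\<^sub>v n + x = x"
  by auto
lemma add_zero_v2[simp]: "(x :: complex vec) \<in> carrier_vec n \<Longrightarrow> x + 0\<^sub>v n = x"
  by auto

lemma pow_mat_add: "T \<in> carrier_mat N N \<Longrightarrow> T ^\<^sub>m (a + b) = T ^\<^sub>m a * T ^\<^sub>m b"
proof (induct b)
  case 0
  then show ?case by simp
next
  case (Suc b)
  then show ?case by (simp add: assoc_mult_mat[of _ N N _ N _ N])
qed

lemma smult_one_mult_vec: "x \<in> carrier_vec N \<Longrightarrow> (c \<cdot>\<^sub>m 1\<^sub>m N) *\<^sub>v (x::complex vec) = c \<cdot>\<^sub>v x"
  by (intro eq_vecI, auto simp: scalar_prod_def if_distrib if_distribR cong: if_cong)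

lemma charm_mult_vec: assumes M: "M \<in> carrier_mat N N" and x: "x \<in> carrier_vec N"
  shows "(M - c \<cdot>\<^sub>m 1\<^sub>m N) *\<^sub>v x = M *\<^sub>v x - c \<cdot>\<^sub>v (x :: complex vec)"
  using M x by (simp add: minus_mult_distrib_mat_vec[of _ N N] smult_one_mult_vec)

lemma vsum_carrier: "set (vs :: complex vec list) \<subseteq> carrier_vec N \<Longrightarrow> foldr (+) vs (0\<^sub>v N) \<in> carrier_vec N"
  by (induct vs, auto)

lemma vsum_append: "set (vs :: complex vec list) \<subseteq> carrier_vec N \<Longrightarrow> set ws \<subseteq> carrier_vec N \<Longrightarrow>
  foldr (+) (vs @ ws) (0\<^sub>v N) = foldr (+) vs (0\<^sub>v N) + foldr (+) ws (0\<^sub>v N)"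
proof (induct vs)
  case Nil
  then show ?case using vsum_carrier[of ws N] by auto
next
  case (Cons v vs)
  then show ?case using vsum_carrier[of ws N] vsum_carrier[of vs N]
    by (simp add: assoc_add_vec[symmetric, of v N])
qed

lemma vsum_mult: "(A :: complex mat) \<in> carrier_mat m N \<Longrightarrow> set vs \<subseteq> carrier_vec N \<Longrightarrow>
  A *\<^sub>v foldr (+) vs (0\<^sub>v N) = foldr (+) (map ((*\<^sub>v) A) vs) (0\<^sub>v m)"
proof (induct vs)
  case Nil
  then show ?case by auto
next
  case (Cons v vs)
  then show ?case using vsum_carrier[of vs N]
    by (auto simp: mult_add_distrib_mat_vec)
qed

lemma vsum_smult: "set (vs :: complex vec list) \<subseteq> carrier_vec N \<Longrightarrow>
  c \<cdot>\<^sub>v foldr (+) vs (0\<^sub>v N) = foldr (+) (map (\<lambda>v. c \<cdot>\<^sub>v v) vs) (0\<^sub>v N)"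
proof (induct vs)
  case Nil
  then show ?case by auto
next
  case (Cons v vs)
  then show ?case using vsum_carrier[of vs N]
    by (auto simp: smult_add_distrib_vec)
qed

lemma vsum_zeros: "\<forall>v\<in>set vs. v = (0\<^sub>v N :: complex vec) \<Longrightarrow> foldr (+) vs (0\<^sub>v N) = 0\<^sub>v N"
  by (induct vs, auto)

(* commuting matrices *)
definition commm :: "nat \<Rightarrow> 'a :: comm_ring_1 mat \<Rightarrow> 'a mat \<Rightarrow> bool" where
  "commm N X Y \<longleftrightarrow> X \<in> carrier_mat N N \<and> Y \<in> carrier_mat N N \<and> X * Y = Y * X"

lemma commm_sym: "commm N X Y \<Longrightarrow> commm N Y X" unfolding commm_def by auto

lemma commm_refl: "X \<in> carrier_mat N N \<Longrightarrow> commm N X X" unfolding commm_def by auto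

lemma commm_one: "X \<in> carrier_mat N N \<Longrightarrow> commm N X (1\<^sub>m N)" unfolding commm_def by auto

lemma commm_mult: assumes "commm N X Y" "commm N X Z" shows "commm N X (Y * Z)"
proof -
  from assms have X: "X \<in> carrier_mat N N" and Y: "Y \<in> carrier_mat N N" and Z: "Z \<in> carrier_mat N N"
    and XY: "X * Y = Y * X" and XZ: "X * Z = Z * X" unfolding commm_def by auto
  have "X * (Y * Z) = (X * Y) * Z" using X Y Z by (simp add: assoc_mult_mat)
  also have "\<dots> = Y * (X * Z)" unfolding XY using X Y Z by (simp add: assoc_mult_mat)
  also have "\<dots> = (Y * Z) * X" unfolding XZ using X Y Z by (simp add: assoc_mult_mat)
  finally show ?thesis using X Y Z unfolding commm_def by auto
qed

lemma commm_charm: assumes "commm N X Y" shows "commm N X (Y - c \<cdot>\<^sub>m 1\<^sub>m N)"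
proof -
  from assms have X: "X \<in> carrier_mat N N" and Y: "Y \<in> carrier_mat N N"
    and XY: "X * Y = Y * X" unfolding commm_def by auto
  have "X * (Y - c \<cdot>\<^sub>m 1\<^sub>m N) = X * Y - c \<cdot>\<^sub>m X" using X Y
    by (simp add: mult_minus_distrib_mat[of _ N N _ N] mult_smult_distrib[of _ N N _ N])
  also have "\<dots> = Y * X - c \<cdot>\<^sub>m X" unfolding XY ..
  also have "\<dots> = (Y - c \<cdot>\<^sub>m 1\<^sub>m N) * X" using X Y
    by (simp add: minus_mult_distrib_mat[of _ N N _ _ N] mult_smult_assoc_mat[of _ N N _ N])
  finally show ?thesis using X Y unfolding commm_def by auto
qed

lemma commm_pow: assumes "commm N X Y" shows "commm N X (Y ^\<^sub>m k)"
proof (induct k)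
  case 0
  then show ?case using assms unfolding commm_def by auto
next
  case (Suc k)
  then show ?case using commm_mult[OF Suc assms] by simp
qed

(* generalized eigenvectors *)
context fixes N :: nat and M :: "complex mat" assumes M: "M \<in> carrier_mat N N"
begin

lemma ge_carrier: "gen_eigvec N M z v \<Longrightarrow> v \<in> carrier_vec N" unfolding gen_eigvec_def by auto

lemma ge_zero: "gen_eigvec N M z (0\<^sub>v N)"
  unfolding gen_eigvec_def by (auto intro: exI[of _ 0])

lemma ge_smult: assumes "gen_eigvec N M z v" shows "gen_eigvec N M z (c \<cdot>\<^sub>v v)"
proof -
  from assms obtain k where v: "v \<in> carrier_vec N" and k: "((M - z \<cdot>\<^sub>m 1\<^sub>m N) ^\<^sub>m k) *\<^sub>v v = 0\<^sub>v N"
    unfolding gen_eigvec_def by auto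
  have "((M - z \<cdot>\<^sub>m 1\<^sub>m N) ^\<^sub>m k) *\<^sub>v (c \<cdot>\<^sub>v v) = c \<cdot>\<^sub>v (((M - z \<cdot>\<^sub>m 1\<^sub>m N) ^\<^sub>m k) *\<^sub>v v)"
    using M v by (intro mult_mat_vec[of _ N N], auto)
  thus ?thesis unfolding gen_eigvec_def using k v by auto
qed

lemma ge_mult: assumes "gen_eigvec N M z v" shows "gen_eigvec N M z (M *\<^sub>v v)"
proof -
  from assms obtain k where v: "v \<in> carrier_vec N" and k: "((M - z \<cdot>\<^sub>m 1\<^sub>m N) ^\<^sub>m k) *\<^sub>v v = 0\<^sub>v N"
    unfolding gen_eigvec_def by auto
  have c: "commm N M ((M - z \<cdot>\<^sub>m 1\<^sub>m N) ^\<^sub>m k)"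
    by (rule commm_pow, rule commm_charm, rule commm_refl[OF M])
  hence P: "(M - z \<cdot>\<^sub>m 1\<^sub>m N) ^\<^sub>m k \<in> carrier_mat N N" unfolding commm_def by auto
  have "((M - z \<cdot>\<^sub>m 1\<^sub>m N) ^\<^sub>m k) *\<^sub>v (M *\<^sub>v v) = (((M - z \<cdot>\<^sub>m 1\<^sub>m N) ^\<^sub>m k) * M) *\<^sub>v v"
    using M v P by (simp add: assoc_mult_mat_vec)
  also have "\<dots> = (M * ((M - z \<cdot>\<^sub>m 1\<^sub>m N) ^\<^sub>m k)) *\<^sub>v v" using c unfolding commm_def by auto
  also have "\<dots> = 0\<^sub>v N" using M v P k by (simp add: assoc_mult_mat_vec)
  finally show ?thesis unfolding gen_eigvec_def using v M by auto
qed

lemma ge_pow_more: assumes v: "v \<in> carrier_vec N" and k: "((M - z \<cdot>\<^sub>m 1\<^sub>m N) ^\<^sub>m k) *\<^sub>v v = 0\<^sub>v N"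
  shows "((M - z \<cdot>\<^sub>m 1\<^sub>m N) ^\<^sub>m (j + k)) *\<^sub>v v = 0\<^sub>v N"
proof -
  let ?T = "M - z \<cdot>\<^sub>m 1\<^sub>m N"
  have T: "?T \<in> carrier_mat N N" using M by auto
  have "(?T ^\<^sub>m (j + k)) *\<^sub>v v = (?T ^\<^sub>m j) *\<^sub>v ((?T ^\<^sub>m k) *\<^sub>v v)"
    unfolding pow_mat_add[OF T] using T v by (simp add: assoc_mult_mat_vec[of _ N N _ N])
  thus ?thesis using k T by simp
qed

lemma ge_add: assumes "gen_eigvec N M z v" "gen_eigvec N M z w" shows "gen_eigvec N M z (v + w)"
proof -
  from assms obtain k1 k2 where v: "v \<in> carrier_vec N" and k1: "((M - z \<cdot>\<^sub>m 1\<^sub>m N) ^\<^sub>m k1) *\<^sub>v v = 0\<^sub>v N"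
    and w: "w \<in> carrier_vec N" and k2: "((M - z \<cdot>\<^sub>m 1\<^sub>m N) ^\<^sub>m k2) *\<^sub>v w = 0\<^sub>v N"
    unfolding gen_eigvec_def by auto
  have a: "((M - z \<cdot>\<^sub>m 1\<^sub>m N) ^\<^sub>m (k2 + k1)) *\<^sub>v v = 0\<^sub>v N" by (rule ge_pow_more[OF v k1])
  have b: "((M - z \<cdot>\<^sub>m 1\<^sub>m N) ^\<^sub>m (k1 + k2)) *\<^sub>v w = 0\<^sub>v N" by (rule ge_pow_more[OF w k2])
  have T: "(M - z \<cdot>\<^sub>m 1\<^sub>m N) ^\<^sub>m (k1 + k2) \<in> carrier_mat N N" using M by auto
  show ?thesis unfolding gen_eigvec_def using v w a b T
    by (intro conjI exI[of _ "k1 + k2"], auto simp: mult_add_distrib_mat_vec[of _ N N] add.commute)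
qed

lemma ge_charm: assumes "gen_eigvec N M z v" shows "gen_eigvec N M z ((M - c \<cdot>\<^sub>m 1\<^sub>m N) *\<^sub>v v)"
proof -
  have v: "v \<in> carrier_vec N" using assms ge_carrier by auto
  have "(M - c \<cdot>\<^sub>m 1\<^sub>m N) *\<^sub>v v = M *\<^sub>v v + (-c) \<cdot>\<^sub>v v" using charm_mult_vec[OF M v]
    using M v by auto
  thus ?thesis using ge_add[OF ge_mult[OF assms] ge_smult[OF assms]] by simp
qed

(* spectral subspace closure *)
lemma ss_carrier: "x \<in> spectral_subspace N M P \<Longrightarrow> x \<in> carrier_vec N"
  unfolding spectral_subspace_def using ge_carrier
  by (auto intro!: vsum_carrier)

lemma ss_zero: "0\<^sub>v N \<in> spectral_subspace N M P"
  unfolding spectral_subspace_def by (auto intro: exI[of _ "[]"])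

lemma ss_gen: "P z \<Longrightarrow> gen_eigvec N M z v \<Longrightarrow> v \<in> spectral_subspace N M P"
  unfolding spectral_subspace_def using ge_carrier
  by (auto intro!: exI[of _ "[v]"])

lemma ss_add: assumes "x \<in> spectral_subspace N M P" "y \<in> spectral_subspace N M P"
  shows "x + y \<in> spectral_subspace N M P"
proof -
  from assms obtain vs ws where vs: "\<forall>v \<in> set vs. \<exists>z. P z \<and> gen_eigvec N M z v" "x = foldr (+) vs (0\<^sub>v N)"
    and ws: "\<forall>v \<in> set ws. \<exists>z. P z \<and> gen_eigvec N M z v" "y = foldr (+) ws (0\<^sub>v N)"
    unfolding spectral_subspace_def by auto
  have "set vs \<subseteq> carrier_vec N" "set ws \<subseteq> carrier_vec N" using vs ws ge_carrier by auto
  from vsum_append[OF this] vs ws show ?thesis unfolding spectral_subspace_def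
    by (intro CollectI exI[of _ "vs @ ws"], auto)
qed

lemma ss_smult: assumes "x \<in> spectral_subspace N M P"
  shows "c \<cdot>\<^sub>v x \<in> spectral_subspace N M P"
proof -
  from assms obtain vs where vs: "\<forall>v \<in> set vs. \<exists>z. P z \<and> gen_eigvec N M z v" "x = foldr (+) vs (0\<^sub>v N)"
    unfolding spectral_subspace_def by auto
  have "set vs \<subseteq> carrier_vec N" using vs ge_carrier by auto
  from vsum_smult[OF this] vs ge_smult show ?thesis unfolding spectral_subspace_def
    by (intro CollectI exI[of _ "map (\<lambda>v. c \<cdot>\<^sub>v v) vs"], auto, blast)
qed

lemma ss_mult: assumes "x \<in> spectral_subspace N M P"
  shows "M *\<^sub>v x \<in> spectral_subspace N M P"
proof -
  from assms obtain vs where vs: "\<forall>v \<in> set vs. \<exists>z. P z \<and> gen_eigvec N M z v" "x = foldr (+) vs (0\<^sub>v N)"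
    unfolding spectral_subspace_def by auto
  have "set vs \<subseteq> carrier_vec N" using vs ge_carrier by auto
  from vsum_mult[OF M this] vs ge_mult show ?thesis unfolding spectral_subspace_def
    by (intro CollectI exI[of _ "map ((*\<^sub>v) M) vs"], auto, blast)
qed

lemma ss_minus: assumes "x \<in> spectral_subspace N M P" "y \<in> spectral_subspace N M P"
  shows "x - y \<in> spectral_subspace N M P"
proof -
  have "x - y = x + (-1) \<cdot>\<^sub>v y" using ss_carrier[OF assms(1)] ss_carrier[OF assms(2)] by auto
  thus ?thesis using ss_add[OF assms(1) ss_smult[OF assms(2)]] by simp
qed

lemma ss_charm: assumes "x \<in> spectral_subspace N M P"
  shows "(M - c \<cdot>\<^sub>m 1\<^sub>m N) *\<^sub>v x \<in> spectral_subspace N M P"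
  unfolding charm_mult_vec[OF M ss_carrier[OF assms]]
  by (intro ss_minus ss_mult ss_smult assms)

end

(* ---- part P3 ---- *)


definition opl :: "nat \<Rightarrow> complex mat \<Rightarrow> complex list \<Rightarrow> complex mat" where
  "opl N M cs = foldr (\<lambda>c X. (M - c \<cdot>\<^sub>m 1\<^sub>m N) * X) cs (1\<^sub>m N)"

lemma opl_Nil[simp]: "opl N M [] = 1\<^sub>m N" unfolding opl_def by simp
lemma opl_Cons[simp]: "opl N M (c # cs) = (M - c \<cdot>\<^sub>m 1\<^sub>m N) * opl N M cs" unfolding opl_def by simp

lemma vec_minus_eq_0: "(a :: complex vec) \<in> carrier_vec N \<Longrightarrow> b \<in> carrier_vec N \<Longrightarrow> a - b = 0\<^sub>v N \<Longrightarrow> a = b"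
  by (intro eq_vecI, auto, metis (no_types) index_minus_vec(1) index_zero_vec(1) carrier_vecD right_minus_eq)

lemma charm_carrier[simp]: "M \<in> carrier_mat N N \<Longrightarrow> M - c \<cdot>\<^sub>m 1\<^sub>m N \<in> carrier_mat N N" by auto
lemma charm_vec_carrier[simp]: "M \<in> carrier_mat N N \<Longrightarrow> x \<in> carrier_vec N \<Longrightarrow>
   (M - c \<cdot>\<^sub>m 1\<^sub>m N) *\<^sub>v x \<in> carrier_vec N" 
  by (rule mult_mat_vec_carrier[of _ N N], auto)

context fixes N :: nat and M :: "complex mat" assumes M: "M \<in> carrier_mat N N"
begin

lemma opl_carrier[simp]: "opl N M cs \<in> carrier_mat N N"
  by (induct cs, insert M, auto)

lemma commm_opl: "commm N Y M \<Longrightarrow> commm N Y (opl N M cs)"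
proof (induct cs)
  case Nil
  then show ?case unfolding commm_def by (metis left_mult_one_mat right_mult_one_mat one_carrier_mat opl_Nil)
next
  case (Cons c cs)
  then show ?case by (simp add: commm_mult commm_charm)
qed

lemma opl_replicate: "opl N M (replicate k z) = (M - z \<cdot>\<^sub>m 1\<^sub>m N) ^\<^sub>m k"
proof (induct k)
  case 0
  then show ?case by simp
next
  case (Suc k)
  let ?T = "M - z \<cdot>\<^sub>m 1\<^sub>m N"
  have "commm N ?T (?T ^\<^sub>m k)" by (rule commm_pow, rule commm_refl, insert M, auto)
  thus ?case using Suc by (simp add: commm_def)
qed

lemma opl_append: "opl N M (cs @ ds) = opl N M cs * opl N M ds"
proof (induct cs)
  case Nil
  then show ?case using left_mult_one_mat[OF opl_carrier[of ds]] by simp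
next
  case (Cons c cs)
  then show ?case using M opl_carrier[of cs] opl_carrier[of ds] 
    by (simp, intro assoc_mult_mat[symmetric, of _ N N _ N _ N], auto)
qed

lemma opl_kill: "\<forall>v\<in>set vs. \<exists>z. P z \<and> gen_eigvec N M z v \<Longrightarrow>
  \<exists>cs. (\<forall>c\<in>set cs. P c) \<and> (\<forall>v\<in>set vs. opl N M cs *\<^sub>v v = 0\<^sub>v N)"
proof (induct vs)
  case Nil
  then show ?case by (intro exI[of _ "[]"], auto)
next
  case (Cons v vs)
  then obtain cs where cs: "\<forall>c\<in>set cs. P c" "\<forall>u\<in>set vs. opl N M cs *\<^sub>v u = 0\<^sub>v N" by auto
  from Cons obtain z k where z: "P z" and v: "v \<in> carrier_vec N" and
    k: "((M - z \<cdot>\<^sub>m 1\<^sub>m N) ^\<^sub>m k) *\<^sub>v v = 0\<^sub>v N" unfolding gen_eigvec_def by auto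
  let ?T = "(M - z \<cdot>\<^sub>m 1\<^sub>m N) ^\<^sub>m k"
  have T: "?T \<in> carrier_mat N N" using M by auto
  have cTM: "commm N ?T M" 
    by (rule commm_sym, rule commm_pow, rule commm_charm, rule commm_refl[OF M])
  have cT: "?T * opl N M cs = opl N M cs * ?T" using commm_opl[OF cTM] unfolding commm_def by auto
  have op: "opl N M (replicate k z @ cs) = ?T * opl N M cs" by (simp add: opl_append opl_replicate)
  show ?case
  proof (intro exI[of _ "replicate k z @ cs"] conjI ballI)
    fix c assume "c \<in> set (replicate k z @ cs)" thus "P c" using z cs by auto
  next
    fix u assume u: "u \<in> set (v # vs)"
    show "opl N M (replicate k z @ cs) *\<^sub>v u = 0\<^sub>v N"
    proof (cases "u = v")
      case True
      have "opl N M (replicate k z @ cs) *\<^sub>v u = opl N M cs *\<^sub>v (?T *\<^sub>v v)"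
        unfolding op cT True using T v by (simp add: assoc_mult_mat_vec[of _ N N _ N])
      thus ?thesis using k by simp
    next
      case False
      with u have "u \<in> set vs" by auto
      hence u: "u \<in> carrier_vec N" "opl N M cs *\<^sub>v u = 0\<^sub>v N" using Cons(2) cs(2) unfolding gen_eigvec_def by auto
      have "opl N M (replicate k z @ cs) *\<^sub>v u = ?T *\<^sub>v (opl N M cs *\<^sub>v u)"
        unfolding op using T u by (simp add: assoc_mult_mat_vec[of _ N N _ N])
      thus ?thesis using u T by simp
    qed
  qed
qed

lemma ss_kill: assumes "x \<in> spectral_subspace N M P"
  shows "\<exists>cs. (\<forall>c\<in>set cs. P c) \<and> opl N M cs *\<^sub>v x = 0\<^sub>v N"
proof -
  from assms obtain vs where vs: "\<forall>v \<in> set vs. \<exists>z. P z \<and> gen_eigvec N M z v" "x = foldr (+) vs (0\<^sub>v N)"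
    unfolding spectral_subspace_def by auto
  have c: "set vs \<subseteq> carrier_vec N" using vs unfolding gen_eigvec_def by auto
  from opl_kill[OF vs(1)] obtain cs where cs: "\<forall>c\<in>set cs. P c" "\<forall>v\<in>set vs. opl N M cs *\<^sub>v v = 0\<^sub>v N" by auto
  have "opl N M cs *\<^sub>v x = foldr (+) (map ((*\<^sub>v) (opl N M cs)) vs) (0\<^sub>v N)"
    unfolding vs(2) by (rule vsum_mult[OF opl_carrier c])
  also have "\<dots> = 0\<^sub>v N" by (rule vsum_zeros, insert cs, auto)
  finally show ?thesis using cs by auto
qed

lemma opl_in_K: assumes K: "K \<subseteq> carrier_vec N" and cl: "\<And>c x. x \<in> K \<Longrightarrow> (M - c \<cdot>\<^sub>m 1\<^sub>m N) *\<^sub>v x \<in> K"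
  and d: "d \<in> K" shows "opl N M cs *\<^sub>v d \<in> K"
proof (induct cs)
  case Nil
  then show ?case using d K by auto
next
  case (Cons c cs)
  have "opl N M (c # cs) *\<^sub>v d = (M - c \<cdot>\<^sub>m 1\<^sub>m N) *\<^sub>v (opl N M cs *\<^sub>v d)"
    unfolding opl_Cons using M d K opl_carrier[of cs] by (intro assoc_mult_mat_vec[of _ N N _ N], auto)
  then show ?case using cl[OF Cons] by simp
qed

lemma extract_eig: assumes K: "K \<subseteq> carrier_vec N" and cl: "\<And>c x. x \<in> K \<Longrightarrow> (M - c \<cdot>\<^sub>m 1\<^sub>m N) *\<^sub>v x \<in> K"
  and d: "d \<in> K" and d0: "d \<noteq> 0\<^sub>v N" 
  shows "opl N M cs *\<^sub>v d = 0\<^sub>v N \<Longrightarrow> \<exists>c\<in>set cs. \<exists>w\<in>K. w \<noteq> 0\<^sub>v N \<and> M *\<^sub>v w = c \<cdot>\<^sub>v w"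
proof (induct cs)
  case Nil
  then show ?case using d d0 K by auto
next
  case (Cons c cs)
  let ?w = "opl N M cs *\<^sub>v d"
  have wK: "?w \<in> K" by (rule opl_in_K[OF K cl d])
  hence w: "?w \<in> carrier_vec N" using K by auto
  show ?case
  proof (cases "?w = 0\<^sub>v N")
    case True
    then show ?thesis using Cons by auto
  next
    case False
    have "(M - c \<cdot>\<^sub>m 1\<^sub>m N) *\<^sub>v ?w = 0\<^sub>v N" using Cons(2) M d K opl_carrier[of cs]
      unfolding opl_Cons by (subst (asm) assoc_mult_mat_vec[of _ N N _ N], auto)
    hence "M *\<^sub>v ?w - c \<cdot>\<^sub>v ?w = 0\<^sub>v N" unfolding charm_mult_vec[OF M w] .
    hence "M *\<^sub>v ?w = c \<cdot>\<^sub>v ?w" by (rule vec_minus_eq_0[rotated 2], insert M w, auto)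
    thus ?thesis using False wK by auto
  qed
qed

lemma ge_eigenvalue: assumes g: "gen_eigvec N M z v" and v0: "v \<noteq> 0\<^sub>v N" shows "eigenvalue M z"
proof -
  from g obtain k where v: "v \<in> carrier_vec N" and
    k: "((M - z \<cdot>\<^sub>m 1\<^sub>m N) ^\<^sub>m k) *\<^sub>v v = 0\<^sub>v N" unfolding gen_eigvec_def by auto
  have kk: "opl N M (replicate k z) *\<^sub>v v = 0\<^sub>v N" unfolding opl_replicate using k .
  have "\<exists>c\<in>set (replicate k z). \<exists>w\<in>carrier_vec N. w \<noteq> 0\<^sub>v N \<and> M *\<^sub>v w = c \<cdot>\<^sub>v w"
    by (rule extract_eig[of "carrier_vec N", OF _ _ v v0 kk], insert M, auto)
  then obtain w where "w \<in> carrier_vec N" "w \<noteq> 0\<^sub>v N" "M *\<^sub>v w = z \<cdot>\<^sub>v w" by auto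
  thus ?thesis unfolding eigenvalue_def eigenvector_def using M by (intro exI[of _ w], auto)
qed

lemma opl_eig: assumes w: "w \<in> carrier_vec N" and Mw: "M *\<^sub>v w = c \<cdot>\<^sub>v w"
  shows "opl N M cs *\<^sub>v w = (\<Prod>x\<leftarrow>cs. (c - x)) \<cdot>\<^sub>v w"
proof (induct cs)
  case Nil
  then show ?case using w by auto
next
  case (Cons x cs)
  have "opl N M (x # cs) *\<^sub>v w = (M - x \<cdot>\<^sub>m 1\<^sub>m N) *\<^sub>v ((\<Prod>x\<leftarrow>cs. (c - x)) \<cdot>\<^sub>v w)"
    using M w Cons opl_carrier[of cs] unfolding opl_Cons by (subst assoc_mult_mat_vec[of _ N N _ N], auto)
  also have "\<dots> = (\<Prod>x\<leftarrow>cs. (c - x)) \<cdot>\<^sub>v ((M - x \<cdot>\<^sub>m 1\<^sub>m N) *\<^sub>v w)"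
    using M w by (intro mult_mat_vec[of _ N N], auto)
  also have "(M - x \<cdot>\<^sub>m 1\<^sub>m N) *\<^sub>v w = (c - x) \<cdot>\<^sub>v w" unfolding charm_mult_vec[OF M w] Mw
    using w by (intro eq_vecI, auto simp: algebra_simps)
  finally show ?case by (simp add: smult_smult_assoc mult.commute)
qed

end

(* ---- part P4 ---- *)


lemma four_block_charm: assumes X: "(X :: complex mat) \<in> carrier_mat m m" and Y: "Y \<in> carrier_mat r r"
  shows "four_block_mat X (0\<^sub>m m r) (0\<^sub>m r m) Y - z \<cdot>\<^sub>m 1\<^sub>m (m+r) = 
    four_block_mat (X - z \<cdot>\<^sub>m 1\<^sub>m m) (0\<^sub>m m r) (0\<^sub>m r m) (Y - z \<cdot>\<^sub>m 1\<^sub>m r)"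
  using X Y by (intro eq_matI, auto simp: index_mat_four_block)

lemma four_block_pow_vec: assumes X: "(X :: complex mat) \<in> carrier_mat m m" and Y: "Y \<in> carrier_mat r r"
  shows "a \<in> carrier_vec m \<Longrightarrow> b \<in> carrier_vec r \<Longrightarrow>
    (four_block_mat X (0\<^sub>m m r) (0\<^sub>m r m) Y ^\<^sub>m k) *\<^sub>v (a @\<^sub>v b) = (X ^\<^sub>m k *\<^sub>v a) @\<^sub>v (Y ^\<^sub>m k *\<^sub>v b)"
proof (induct k arbitrary: a b)
  case 0
  then show ?case using X Y by (simp add: one_mult_mat_vec)
next
  case (Suc k)
  let ?B = "four_block_mat X (0\<^sub>m m r) (0\<^sub>m r m) Y"
  have B: "?B \<in> carrier_mat (m+r) (m+r)" using X Y by auto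
  have ab: "a @\<^sub>v b \<in> carrier_vec (m+r)" using Suc by auto
  have "(?B ^\<^sub>m Suc k) *\<^sub>v (a @\<^sub>v b) = (?B ^\<^sub>m k) *\<^sub>v (?B *\<^sub>v (a @\<^sub>v b))"
    using B ab by (simp add: assoc_mult_mat_vec[of _ "m+r" "m+r" _ "m+r"])
  also have "?B *\<^sub>v (a @\<^sub>v b) = (X *\<^sub>v a) @\<^sub>v (Y *\<^sub>v b)" 
    by (rule mult_mat_vec_split[OF X Y Suc(2) Suc(3)])
  also have "(?B ^\<^sub>m k) *\<^sub>v \<dots> = (X ^\<^sub>m k *\<^sub>v (X *\<^sub>v a)) @\<^sub>v (Y ^\<^sub>m k *\<^sub>v (Y *\<^sub>v b))"
    by (rule Suc(1), insert X Y Suc, auto)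
  also have "X ^\<^sub>m k *\<^sub>v (X *\<^sub>v a) = X ^\<^sub>m Suc k *\<^sub>v a" using X Suc
    by (simp add: assoc_mult_mat_vec[of _ m m _ m])
  also have "Y ^\<^sub>m k *\<^sub>v (Y *\<^sub>v b) = Y ^\<^sub>m Suc k *\<^sub>v b" using Y Suc
    by (simp add: assoc_mult_mat_vec[of _ r r _ r])
  finally show ?case .
qed

lemma jb_charm: "jordan_block m (a :: complex) - a \<cdot>\<^sub>m 1\<^sub>m m = jordan_block m 0"
  by (intro eq_matI, auto simp: jordan_block_index)

lemma jb_zero_pow: "(jordan_block m (0 :: complex)) ^\<^sub>m m = 0\<^sub>m m m"
  unfolding jordan_block_zero_pow by (intro eq_matI, auto)

lemma unit_vec_split1: "i < m \<Longrightarrow> unit_vec (m + r) i = (unit_vec m i @\<^sub>v 0\<^sub>v r :: complex vec)"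
  by (intro eq_vecI, auto)

lemma unit_vec_split2: "m \<le> i \<Longrightarrow> i < m + r \<Longrightarrow> unit_vec (m + r) i = (0\<^sub>v m @\<^sub>v unit_vec r (i - m) :: complex vec)"
  by (intro eq_vecI, auto)

lemma jm_gen: "i < sum_list (map fst n_as) \<Longrightarrow> \<exists>z k. 
  ((jordan_matrix n_as - z \<cdot>\<^sub>m 1\<^sub>m (sum_list (map fst n_as))) ^\<^sub>m k) *\<^sub>v unit_vec (sum_list (map fst n_as)) i
    = (0\<^sub>v (sum_list (map fst n_as)) :: complex vec)"
proof (induct n_as arbitrary: i)
  case Nil
  then show ?case by simp
next
  case (Cons ma n_as)
  obtain m a where ma: "ma = (m, a)" by force
  let ?r = "sum_list (map fst n_as)"
  let ?J = "jordan_matrix n_as"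
  have J: "?J \<in> carrier_mat ?r ?r" by auto
  have JB: "jordan_block m a \<in> carrier_mat m m" by auto
  have s: "sum_list (map fst (ma # n_as)) = m + ?r" unfolding ma by simp
  have jm: "jordan_matrix (ma # n_as) = four_block_mat (jordan_block m a) (0\<^sub>m m ?r) (0\<^sub>m ?r m) ?J"
    unfolding ma jordan_matrix_Cons by simp
  have key: "\<And>z k x y. x \<in> carrier_vec m \<Longrightarrow> y \<in> carrier_vec ?r \<Longrightarrow>
    ((jordan_matrix (ma # n_as) - z \<cdot>\<^sub>m 1\<^sub>m (m + ?r)) ^\<^sub>m k) *\<^sub>v (x @\<^sub>v y) = 
    ((jordan_block m a - z \<cdot>\<^sub>m 1\<^sub>m m) ^\<^sub>m k *\<^sub>v x) @\<^sub>v ((?J - z \<cdot>\<^sub>m 1\<^sub>m ?r) ^\<^sub>m k *\<^sub>v y)"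
    unfolding jm four_block_charm[OF JB J] 
    by (rule four_block_pow_vec, insert JB J, auto)
  show ?case unfolding s
  proof (cases "i < m")
    case True
    show "\<exists>z k. ((jordan_matrix (ma # n_as) - z \<cdot>\<^sub>m 1\<^sub>m (m + ?r)) ^\<^sub>m k) *\<^sub>v unit_vec (m + ?r) i = 0\<^sub>v (m + ?r)"
    proof (intro exI[of _ a] exI[of _ m])
      show "((jordan_matrix (ma # n_as) - a \<cdot>\<^sub>m 1\<^sub>m (m + ?r)) ^\<^sub>m m) *\<^sub>v unit_vec (m + ?r) i = 0\<^sub>v (m + ?r)"
        unfolding unit_vec_split1[OF True] key[OF unit_vec_carrier zero_carrier_vec] jb_charm jb_zero_pow
        mult_zero_v[of "(?J - a \<cdot>\<^sub>m 1\<^sub>m ?r) ^\<^sub>m m" ?r ?r, OF pow_carrier_mat[OF charm_carrier[OF J]]]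
        by (intro eq_vecI, auto)
    qed
  next
    case False
    with Cons(2) s have i: "i - m < ?r" by auto
    from Cons(1)[OF i] obtain z k where zk: "((?J - z \<cdot>\<^sub>m 1\<^sub>m ?r) ^\<^sub>m k) *\<^sub>v unit_vec ?r (i - m) = 0\<^sub>v ?r" by auto
    show "\<exists>z k. ((jordan_matrix (ma # n_as) - z \<cdot>\<^sub>m 1\<^sub>m (m + ?r)) ^\<^sub>m k) *\<^sub>v unit_vec (m + ?r) i = 0\<^sub>v (m + ?r)"
    proof (intro exI[of _ z] exI[of _ k])
      show "((jordan_matrix (ma # n_as) - z \<cdot>\<^sub>m 1\<^sub>m (m + ?r)) ^\<^sub>m k) *\<^sub>v unit_vec (m + ?r) i = 0\<^sub>v (m + ?r)"
    proof -
      have eq: "unit_vec (m + ?r) i = (0\<^sub>v m @\<^sub>v unit_vec ?r (i - m) :: complex vec)" 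
        by (rule unit_vec_split2, insert False Cons(2) s, auto)
      show ?thesis unfolding eq key[OF zero_carrier_vec unit_vec_carrier] zk
        mult_zero_v[of "(jordan_block m a - z \<cdot>\<^sub>m 1\<^sub>m m) ^\<^sub>m k" m m, OF pow_carrier_mat[OF charm_carrier[OF JB]]]
        by (intro eq_vecI, auto)
    qed
    qed
  qed
qed

lemma col_as_mult: "(P :: complex mat) \<in> carrier_mat N N \<Longrightarrow> i < N \<Longrightarrow> col P i = P *\<^sub>v unit_vec N (i :: nat)"
  by (intro eq_vecI, auto simp: scalar_prod_right_unit)

lemma jordan_basis: assumes M: "M \<in> carrier_mat N N"
  shows "\<exists>P Q lam. P \<in> carrier_mat N N \<and> Q \<in> carrier_mat N N \<and> P * Q = 1\<^sub>m N \<and> Q * P = 1\<^sub>m N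
     \<and> (\<forall>i<N. gen_eigvec N M (lam i) (col P i))"
proof -
  from char_poly_factorized[OF M] obtain as where "char_poly M = (\<Prod>a\<leftarrow>as. [:- a, 1:])" by auto
  from jordan_nf_exists[OF M this] obtain n_as where "jordan_nf M n_as" by auto
  hence "similar_mat M (jordan_matrix n_as)" unfolding jordan_nf_def by auto
  then obtain P Q where wit: "similar_mat_wit M (jordan_matrix n_as) P Q" unfolding similar_mat_def by auto
  note w = similar_mat_witD2[OF M wit]
  let ?J = "jordan_matrix n_as"
  have sN: "sum_list (map fst n_as) = N" using w(5) by auto
  have "\<forall>i<N. \<exists>z. gen_eigvec N M z (col P i)"
  proof (intro allI impI)
    fix i assume i: "i < N"
    from jm_gen[of i n_as, unfolded sN, OF i] obtain z k where
      zk: "((?J - z \<cdot>\<^sub>m 1\<^sub>m N) ^\<^sub>m k) *\<^sub>v unit_vec N i = 0\<^sub>v N" by auto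
    have cm: "\<And>A. A \<in> carrier_mat N N \<Longrightarrow> char_matrix A z = A - z \<cdot>\<^sub>m 1\<^sub>m N"
      unfolding char_matrix_def by (intro eq_matI, auto)
    have wit2: "similar_mat_wit ((M - z \<cdot>\<^sub>m 1\<^sub>m N) ^\<^sub>m k) ((?J - z \<cdot>\<^sub>m 1\<^sub>m N) ^\<^sub>m k) P Q"
      using similar_mat_wit_pow[OF similar_mat_wit_char_matrix[OF wit, of z]] 
      unfolding cm[OF M] cm[OF w(5)] .
    note w2 = similar_mat_witD2[OF _ wit2, of N]
    let ?A = "(M - z \<cdot>\<^sub>m 1\<^sub>m N) ^\<^sub>m k" let ?B = "(?J - z \<cdot>\<^sub>m 1\<^sub>m N) ^\<^sub>m k"
    have A: "?A \<in> carrier_mat N N" using M by auto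
    have B: "?B \<in> carrier_mat N N" using w(5) by auto
    have "?A *\<^sub>v col P i = P * ?B * Q *\<^sub>v (P *\<^sub>v unit_vec N i)"
      unfolding col_as_mult[OF w(6) i] using w2(3)[OF A] by simp
    also have "\<dots> = P *\<^sub>v (?B *\<^sub>v ((Q * P) *\<^sub>v unit_vec N i))"
      using w(6) w(7) B by (simp add: assoc_mult_mat_vec[of _ N N _ N] assoc_mult_mat[of _ N N _ N _ N])
    also have "\<dots> = 0\<^sub>v N" unfolding w(2) using zk w(6) by simp
    finally have "?A *\<^sub>v col P i = 0\<^sub>v N" .
    thus "\<exists>z. gen_eigvec N M z (col P i)" unfolding gen_eigvec_def using w(6) i
      by (intro exI[of _ z] conjI exI[of _ k], auto)
  qed
  then obtain lam where "\<forall>i<N. gen_eigvec N M (lam i) (col P i)" by metis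
  thus ?thesis using w by blast
qed


(* ---- part P5 ---- *)


fun lspan :: "nat \<Rightarrow> complex vec list \<Rightarrow> complex vec set" where
  "lspan N [] = {0\<^sub>v N}"
| "lspan N (v # vs) = {c \<cdot>\<^sub>v v + y | c y. y \<in> lspan N vs}"

lemma smult_mat_mult_vec: "A \<in> carrier_mat nr nc \<Longrightarrow> v \<in> carrier_vec nc \<Longrightarrow>
  (c \<cdot>\<^sub>m A) *\<^sub>v v = c \<cdot>\<^sub>v (A *\<^sub>v (v :: complex vec))"
  by (intro eq_vecI, auto simp: scalar_prod_def sum_distrib_left mult.assoc)

lemma mat_eq_by_vec: assumes A: "(A :: complex mat) \<in> carrier_mat N N" and B: "B \<in> carrier_mat N N"
  and e: "\<And>v. v \<in> carrier_vec N \<Longrightarrow> A *\<^sub>v v = B *\<^sub>v v" shows "A = B"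
proof (rule mat_col_eqI)
  fix i assume i: "i < dim_col B"
  have "col A i = A *\<^sub>v unit_vec N i" using A i B by (intro eq_vecI, auto simp: scalar_prod_right_unit)
  also have "\<dots> = B *\<^sub>v unit_vec N i" by (rule e, auto)
  also have "\<dots> = col B i" using A i B by (intro eq_vecI, auto simp: scalar_prod_right_unit)
  finally show "col A i = col B i" .
qed (insert A B, auto)

context fixes N :: nat
begin

lemma lspan_carrier: "set vs \<subseteq> carrier_vec N \<Longrightarrow> y \<in> lspan N vs \<Longrightarrow> y \<in> carrier_vec N"
  by (induct vs arbitrary: y, auto)

lemma lspan_zero: "set vs \<subseteq> carrier_vec N \<Longrightarrow> 0\<^sub>v N \<in> lspan N vs"
proof (induct vs)
  case (Cons v vs)
  then show ?case by (auto intro!: exI[of _ 0] exI[of _ "0\<^sub>v N"] eq_vecI)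
qed simp

lemma lspan_add: "set vs \<subseteq> carrier_vec N \<Longrightarrow> x \<in> lspan N vs \<Longrightarrow> y \<in> lspan N vs \<Longrightarrow> x + y \<in> lspan N vs"
proof (induct vs arbitrary: x y)
  case Nil
  then show ?case by auto
next
  case (Cons v vs)
  from Cons(3) obtain c x' where x: "x = c \<cdot>\<^sub>v v + x'" "x' \<in> lspan N vs" by auto
  from Cons(4) obtain d y' where y: "y = d \<cdot>\<^sub>v v + y'" "y' \<in> lspan N vs" by auto
  have c: "x' \<in> carrier_vec N" "y' \<in> carrier_vec N" "v \<in> carrier_vec N" using x y Cons(2) lspan_carrier[of vs] by auto
  have "x + y = (c + d) \<cdot>\<^sub>v v + (x' + y')" unfolding x y using c
    by (intro eq_vecI, auto simp: algebra_simps)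
  moreover have "x' + y' \<in> lspan N vs" using Cons x y by auto
  ultimately show ?case by auto
qed

lemma lspan_smult: "set vs \<subseteq> carrier_vec N \<Longrightarrow> x \<in> lspan N vs \<Longrightarrow> a \<cdot>\<^sub>v x \<in> lspan N vs"
proof (induct vs arbitrary: x)
  case Nil
  then show ?case by auto
next
  case (Cons v vs)
  from Cons(3) obtain c x' where x: "x = c \<cdot>\<^sub>v v + x'" "x' \<in> lspan N vs" by auto
  have c: "x' \<in> carrier_vec N" "v \<in> carrier_vec N" using x Cons(2) lspan_carrier[of vs] by auto
  have "a \<cdot>\<^sub>v x = (a * c) \<cdot>\<^sub>v v + a \<cdot>\<^sub>v x'" unfolding x using c
    by (intro eq_vecI, auto simp: algebra_simps)
  moreover have "a \<cdot>\<^sub>v x' \<in> lspan N vs" using Cons x by auto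
  ultimately show ?case by auto
qed

lemma lspan_minus: "set vs \<subseteq> carrier_vec N \<Longrightarrow> x \<in> lspan N vs \<Longrightarrow> y \<in> lspan N vs \<Longrightarrow> x - y \<in> lspan N vs"
proof -
  assume a: "set vs \<subseteq> carrier_vec N" "x \<in> lspan N vs" "y \<in> lspan N vs"
  have "x - y = x + (-1) \<cdot>\<^sub>v y" using a lspan_carrier by (intro eq_vecI, auto)
  thus ?thesis using lspan_add[OF a(1) a(2) lspan_smult[OF a(1) a(3)]] by simp
qed

lemma lspan_gen: "set vs \<subseteq> carrier_vec N \<Longrightarrow> v \<in> set vs \<Longrightarrow> v \<in> lspan N vs"
proof (induct vs)
  case (Cons w vs)
  show ?case
  proof (cases "v = w")
    case True
    thus ?thesis using Cons(2) lspan_zero[of vs] by (auto intro!: exI[of _ 1] exI[of _ "0\<^sub>v N"])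
  next
    case False
    hence vv: "v \<in> lspan N vs" using Cons by auto
    hence "v \<in> carrier_vec N" using Cons(2) lspan_carrier[of vs] by auto
    thus ?thesis using vv Cons(2) by (auto intro!: exI[of _ 0] exI[of _ v] eq_vecI)
  qed
qed simp

lemma lspan_subset: assumes "set vs \<subseteq> carrier_vec N" and S0: "0\<^sub>v N \<in> S"
  and Sa: "\<And>x y. x \<in> S \<Longrightarrow> y \<in> S \<Longrightarrow> x + y \<in> S" and Ss: "\<And>c x. x \<in> S \<Longrightarrow> c \<cdot>\<^sub>v x \<in> S"
  and gen: "set vs \<subseteq> S"
  shows "lspan N vs \<subseteq> S"
  using assms(1) gen by (induct vs, insert S0 Sa Ss, auto)

definition outer :: "complex vec \<Rightarrow> complex mat" where
  "outer r = mat (dim_vec r) (dim_vec r) (\<lambda>(i,j). r $ i * cnj (r $ j))"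

lemma outer_carrier: "r \<in> carrier_vec N \<Longrightarrow> outer r \<in> carrier_mat N N"
  unfolding outer_def by auto

lemma outer_mult: "r \<in> carrier_vec N \<Longrightarrow> v \<in> carrier_vec N \<Longrightarrow> outer r *\<^sub>v v = ip r v \<cdot>\<^sub>v r"
  unfolding outer_def ip_def by (intro eq_vecI, auto simp: scalar_prod_def sum_distrib_left algebra_simps)

lemma outer_adj: "r \<in> carrier_vec N \<Longrightarrow> mat_adjoint (outer r) = outer r"
  unfolding outer_def by (intro eq_matI, auto)

lemma range_mem: "P \<in> carrier_mat N N \<Longrightarrow> x \<in> carrier_vec N \<Longrightarrow> P *\<^sub>v x \<in> mat_range P"
  unfolding mat_range_def by auto

lemma proj_exists: "set vs \<subseteq> carrier_vec N \<Longrightarrow> \<exists>P. is_orth_proj N (lspan N vs) P"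
proof (induct vs)
  case Nil
  have "is_orth_proj N (lspan N []) (0\<^sub>m N N)"
    unfolding is_orth_proj_def mat_range_def by (auto intro!: eq_vecI exI[of _ "0\<^sub>v N"])
  thus ?case by blast
next
  case (Cons x vs)
  hence x: "x \<in> carrier_vec N" and vs: "set vs \<subseteq> carrier_vec N" by auto
  from Cons obtain P where P: "is_orth_proj N (lspan N vs) P" by auto
  hence Pc: "P \<in> carrier_mat N N" and PP: "P * P = P" and Pa: "mat_adjoint P = P"
    and Pr: "mat_range P = lspan N vs" unfolding is_orth_proj_def by auto
  have PPv: "\<And>v. v \<in> carrier_vec N \<Longrightarrow> P *\<^sub>v (P *\<^sub>v v) = P *\<^sub>v v"
    using Pc PP by (metis assoc_mult_mat_vec)
  have ipP: "\<And>u v. u \<in> carrier_vec N \<Longrightarrow> v \<in> carrier_vec N \<Longrightarrow> ip u (P *\<^sub>v v) = ip (P *\<^sub>v u) v"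
    using ip_adj[OF Pc] Pa by metis
  define r where "r = x - P *\<^sub>v x"
  have r: "r \<in> carrier_vec N" unfolding r_def using x Pc by auto
  have Pr0: "P *\<^sub>v r = 0\<^sub>v N" unfolding r_def using Pc x 
    by (simp add: mult_minus_distrib_mat_vec[of _ N N] PPv)
  have rP: "\<And>v. v \<in> carrier_vec N \<Longrightarrow> ip r (P *\<^sub>v v) = 0" using ipP[OF r] Pr0 by simp
  have inrange: "\<And>y. y \<in> lspan N vs \<Longrightarrow> y \<in> carrier_vec N \<and> P *\<^sub>v y = y"
  proof -
    fix y assume "y \<in> lspan N vs"
    then obtain u where u: "u \<in> carrier_vec N" "y = P *\<^sub>v u" unfolding Pr[symmetric] mat_range_def using Pc by auto
    thus "y \<in> carrier_vec N \<and> P *\<^sub>v y = y" using PPv Pc by auto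
  qed
  show ?case
  proof (cases "r = 0\<^sub>v N")
    case True
    hence "x - P *\<^sub>v x = 0\<^sub>v N" unfolding r_def .
    hence xP: "x = P *\<^sub>v x" by (rule vec_minus_eq_0[rotated 2], insert x Pc, auto)
    have "P *\<^sub>v x \<in> lspan N vs" using Pr range_mem[OF Pc x] by simp
    hence xs: "x \<in> lspan N vs" unfolding xP[symmetric] .
    have "lspan N (x # vs) = lspan N vs"
    proof
      show "lspan N (x # vs) \<subseteq> lspan N vs" using lspan_add[OF vs] lspan_smult[OF vs, OF xs] by auto
      show "lspan N vs \<subseteq> lspan N (x # vs)"
      proof
        fix y assume y: "y \<in> lspan N vs"
        hence "y = 0 \<cdot>\<^sub>v x + y" using x lspan_carrier[OF vs y] by (intro eq_vecI, auto)
        thus "y \<in> lspan N (x # vs)" using y by auto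
      qed
    qed
    thus ?thesis using P by auto
  next
    case False
    define s where "s = ip r r"
    have s0: "s \<noteq> 0" unfolding s_def using ip_self_eq_0[OF r] False by auto
    define P' where "P' = P + (1 / s) \<cdot>\<^sub>m outer r"
    have P'c: "P' \<in> carrier_mat N N" unfolding P'_def using Pc outer_carrier[OF r] by auto
    have P'v: "\<And>v. v \<in> carrier_vec N \<Longrightarrow> P' *\<^sub>v v = P *\<^sub>v v + (ip r v / s) \<cdot>\<^sub>v r"
      unfolding P'_def using Pc outer_carrier[OF r] r
      by (simp add: add_mult_distrib_mat_vec[of _ N N] smult_mat_mult_vec[of _ N N] outer_mult smult_smult_assoc)
    have ipx: "ip r x = s"
    proof -
      have "x = r + P *\<^sub>v x" unfolding r_def using x Pc by (intro eq_vecI, auto)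
      hence "ip r x = ip r (r + P *\<^sub>v x)" by simp
      also have "\<dots> = s" unfolding s_def using r x Pc by (simp add: ip_add_right[of _ N] rP)
      finally show ?thesis .
    qed
    have P'x: "P' *\<^sub>v x = x" unfolding P'v[OF x] ipx using s0 x Pc unfolding r_def 
      by (intro eq_vecI, auto)
    have P'y: "\<And>y. y \<in> lspan N vs \<Longrightarrow> P' *\<^sub>v y = y"
    proof -
      fix y assume y: "y \<in> lspan N vs"
      from inrange[OF this] have yc: "y \<in> carrier_vec N" and Py: "P *\<^sub>v y = y" by auto
      have "ip r y = 0" using rP[OF yc] Py by simp
      thus "P' *\<^sub>v y = y" unfolding P'v[OF yc] Py using yc r by (intro eq_vecI, auto)
    qed
    have P'P': "P' * P' = P'"
    proof (rule mat_eq_by_vec[of _ N])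
      fix v :: "complex vec" assume v: "v \<in> carrier_vec N"
      have Pvs: "P *\<^sub>v v \<in> lspan N vs" using Pr range_mem[OF Pc v] by auto
      have "P' *\<^sub>v v = P *\<^sub>v v + (ip r v / s) \<cdot>\<^sub>v r" by (rule P'v[OF v])
      have "(P' * P') *\<^sub>v v = P' *\<^sub>v (P' *\<^sub>v v)" using P'c v by (simp add: assoc_mult_mat_vec[of _ N N _ N])
      also have "\<dots> = P' *\<^sub>v (P *\<^sub>v v) + (ip r v / s) \<cdot>\<^sub>v (P' *\<^sub>v r)"
        unfolding P'v[OF v] using P'c Pc v r 
        by (simp add: mult_add_distrib_mat_vec[of _ N N] mult_mat_vec[of _ N N])
      also have "P' *\<^sub>v (P *\<^sub>v v) = P *\<^sub>v v" by (rule P'y[OF Pvs])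
      also have "P' *\<^sub>v r = r" unfolding P'v[OF r] Pr0 s_def[symmetric] using s0 r by (intro eq_vecI, auto)
      also have "P *\<^sub>v v + (ip r v / s) \<cdot>\<^sub>v r = P' *\<^sub>v v" by (rule P'v[OF v, symmetric])
      finally show "(P' * P') *\<^sub>v v = P' *\<^sub>v v" .
    qed (insert P'c, auto)
    have sreal: "cnj s = s" unfolding s_def ip_self by (simp add: complex_eq_iff)
    have P'a: "mat_adjoint P' = P'" unfolding P'_def 
      using Pc outer_carrier[OF r] by (simp add: adj_add[of _ N N] adj_smult Pa outer_adj[OF r] sreal)
    have P'r: "mat_range P' = lspan N (x # vs)"
    proof
      show "mat_range P' \<subseteq> lspan N (x # vs)"
      proof
        fix w assume "w \<in> mat_range P'"
        then obtain v where v: "v \<in> carrier_vec N" and w: "w = P' *\<^sub>v v" unfolding mat_range_def using P'c by auto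
        define a where "a = ip r v / s"
        have "w = a \<cdot>\<^sub>v x + P *\<^sub>v (v - a \<cdot>\<^sub>v x)" unfolding w P'v[OF v] a_def[symmetric]
          unfolding r_def using Pc v x by (simp add: mult_minus_distrib_mat_vec[of _ N N] mult_mat_vec[of _ N N], 
            intro eq_vecI, auto simp: algebra_simps)
        moreover have "P *\<^sub>v (v - a \<cdot>\<^sub>v x) \<in> lspan N vs" using Pr range_mem[OF Pc, of "v - a \<cdot>\<^sub>v x"] v x by auto
        ultimately show "w \<in> lspan N (x # vs)" by auto
      qed
      show "lspan N (x # vs) \<subseteq> mat_range P'"
      proof
        fix w assume "w \<in> lspan N (x # vs)"
        then obtain c y where w: "w = c \<cdot>\<^sub>v x + y" and y: "y \<in> lspan N vs" by auto
        have yc: "y \<in> carrier_vec N" using inrange[OF y] by auto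
        have "P' *\<^sub>v w = c \<cdot>\<^sub>v (P' *\<^sub>v x) + P' *\<^sub>v y" unfolding w using P'c x yc
          by (simp add: mult_add_distrib_mat_vec[of _ N N] mult_mat_vec[of _ N N])
        also have "\<dots> = w" unfolding P'x P'y[OF y] w ..
        finally have "w = P' *\<^sub>v w" by simp
        moreover have "w \<in> carrier_vec N" unfolding w using x yc by auto
        ultimately show "w \<in> mat_range P'" using range_mem[OF P'c] by metis
      qed
    qed
    show ?thesis unfolding is_orth_proj_def using P'c P'P' P'a P'r by blast
  qed
qed

end

(* ---- part P6 ---- *)


lemma cnj_hom: "comm_ring_hom cnj" by (unfold_locales, auto)

lemma det_adj: assumes X: "(X :: complex mat) \<in> carrier_mat N N" shows "det (mat_adjoint X) = cnj (det X)"
proof -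
  have "mat_adjoint X = transpose_mat (map_mat cnj X)" using X by (intro eq_matI, auto)
  hence "det (mat_adjoint X) = det (map_mat cnj X)" using X by (simp add: det_transpose[of _ N])
  also have "\<dots> = cnj (det X)" by (rule comm_ring_hom.hom_det[OF cnj_hom])
  finally show ?thesis .
qed

lemma eigenvalue_adj: assumes H: "(H :: complex mat) \<in> carrier_mat N N" and e: "eigenvalue (mat_adjoint H) z"
  shows "eigenvalue H (cnj z)"
proof -
  have aH: "mat_adjoint H \<in> carrier_mat N N" using H by auto
  have "char_matrix (mat_adjoint H) z = mat_adjoint (char_matrix H (cnj z))"
    unfolding char_matrix_def using H by (intro eq_matI, auto)
  hence "det (char_matrix (mat_adjoint H) z) = cnj (det (char_matrix H (cnj z)))"
    using det_adj[of "char_matrix H (cnj z)" N] H by auto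
  thus ?thesis using e unfolding eigenvalue_det[OF aH] eigenvalue_det[OF H] by auto
qed

lemma order_linear_prod: "order w (\<Prod>a\<leftarrow>as. [:- a, 1:]) = count_list as (w :: complex)"
proof (induct as)
  case Nil
  then show ?case by (simp add: order_0I)
next
  case (Cons a as)
  have nz: "(\<Prod>a\<leftarrow>as. [:- a, 1:]) \<noteq> (0 :: complex poly)" 
    by (subst prod_list_zero_iff, auto)
  have l0: "[:- a, 1:] \<noteq> (0 :: complex poly)" by simp
  have "[:- a, 1:] * (\<Prod>a\<leftarrow>as. [:- a, 1:]) \<noteq> 0" using nz l0 by (metis mult_eq_0_iff)
  hence "order w ([:- a, 1:] * (\<Prod>a\<leftarrow>as. [:- a, 1:])) = order w [:- a, 1:] + order w (\<Prod>a\<leftarrow>as. [:- a, 1:])"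
    by (rule order_mult)
  moreover have "order w [:- a, 1:] = (if a = w then 1 else 0)" unfolding order_linear' by auto
  ultimately show ?case using Cons by simp
qed

lemma sum_count_filter: "(\<Sum>z \<in> {z. z \<in> set as \<and> P z}. count_list as z) = length (filter P as)"
proof -
  have "(\<Sum>z \<in> {z. z \<in> set as \<and> P z}. count_list as z) = (\<Sum>z \<in> {z. z \<in> set as \<and> P z}. count_list (filter P as) z)"
    by (intro sum.cong, auto simp: count_list_eq_length_filter, metis filter_filter)
  also have "\<dots> = length (filter P as)" by (rule sum_count_set, auto)
  finally show ?thesis .
qed

lemma num_eigs_count: assumes H: "(H :: complex mat) \<in> carrier_mat N N" 
  and cp: "char_poly H = (\<Prod>a\<leftarrow>as. [:- a, 1:])"
  shows "num_eigs H P = length (filter P as)"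
proof -
  have ev: "\<And>z. eigenvalue H z \<longleftrightarrow> z \<in> set as"
    unfolding eigenvalue_root_char_poly[OF H] cp poly_prod_list_zero_iff by auto
  have "num_eigs H P = (\<Sum>z \<in> {z. z \<in> set as \<and> P z}. count_list as z)"
    unfolding num_eigs_def ev cp order_linear_prod ..
  thus ?thesis using sum_count_filter by simp
qed

lemma no_imag_eig: assumes H: "(H :: complex mat) \<in> carrier_mat (n+n) (n+n)"
  and neg: "num_eigs H (\<lambda>z. Re z < 0) = n" and pos: "num_eigs H (\<lambda>z. Re z > 0) = n"
  and e: "eigenvalue H w" shows "Re w \<noteq> 0"
proof -
  from char_poly_factorized[OF H] obtain as where cp: "char_poly H = (\<Prod>a\<leftarrow>as. [:- a, 1:])"
    and len: "length as = n + n" by auto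
  have l1: "length (filter (\<lambda>z. Re z < 0) as) = n" using num_eigs_count[OF H cp] neg by simp
  have l2: "length (filter (\<lambda>z. Re z > 0) as) = n" using num_eigs_count[OF H cp] pos by simp
  let ?as = "filter (\<lambda>z. \<not> Re z < 0) as"
  have l3: "length ?as = n" using sum_length_filter_compl[of "\<lambda>z. Re z < 0" as] l1 len by simp
  have "filter (\<lambda>z. Re z > 0) ?as = filter (\<lambda>z. Re z > 0) as" by (simp add: filter_filter, metis less_asym)
  hence "length (filter (\<lambda>z. \<not> Re z > 0) ?as) = 0" using sum_length_filter_compl[of "\<lambda>z. Re z > 0" ?as] l2 l3 by simp
  hence "\<forall>z\<in>set as. Re z \<noteq> 0" by (auto simp: filter_empty_conv)
  moreover have "w \<in> set as" using e unfolding eigenvalue_root_char_poly[OF H] cp poly_prod_list_zero_iff by auto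
  ultimately show ?thesis by auto
qed


(* ---- part P7 ---- *)


lemma vsum_filter_split: fixes f :: "'b \<Rightarrow> complex vec" assumes c: "\<And>i. i \<in> set xs \<Longrightarrow> f i \<in> carrier_vec N"
  shows "foldr (+) (map f xs) (0\<^sub>v N) = foldr (+) (map f (filter p xs)) (0\<^sub>v N) + 
    foldr (+) (map f (filter (\<lambda>i. \<not> p i) xs)) (0\<^sub>v N)"
  using c
proof (induct xs)
  case Nil
  then show ?case by simp
next
  case (Cons x xs)
  have c1: "foldr (+) (map f (filter p xs)) (0\<^sub>v N) \<in> carrier_vec N"
    by (rule vsum_carrier, insert Cons(2), auto)
  have c2: "foldr (+) (map f (filter (\<lambda>i. \<not> p i) xs)) (0\<^sub>v N) \<in> carrier_vec N"
    by (rule vsum_carrier, insert Cons(2), auto)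
  have fx: "f x \<in> carrier_vec N" using Cons(2) by auto
  have IH: "foldr (+) (map f xs) (0\<^sub>v N) = foldr (+) (map f (filter p xs)) (0\<^sub>v N) + 
    foldr (+) (map f (filter (\<lambda>i. \<not> p i) xs)) (0\<^sub>v N)" using Cons by simp
  let ?S1 = "foldr (+) (map f (filter p xs)) (0\<^sub>v N)"
  let ?S2 = "foldr (+) (map f (filter (\<lambda>i. \<not> p i) xs)) (0\<^sub>v N)"
  show ?case
  proof (cases "p x")
    case True
    have "f x + (?S1 + ?S2) = (f x + ?S1) + ?S2" using fx c1 c2 by (rule assoc_add_vec[symmetric])
    then show ?thesis using IH True by simp
  next
    case False
    have "f x + (?S1 + ?S2) = (f x + ?S1) + ?S2" using fx c1 c2 by (rule assoc_add_vec[symmetric])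
    also have "f x + ?S1 = ?S1 + f x" using fx c1 by (rule comm_add_vec)
    also have "(?S1 + f x) + ?S2 = ?S1 + (f x + ?S2)" using c1 fx c2 by (rule assoc_add_vec)
    finally show ?thesis using IH False by simp
  qed
qed

lemma vsum_index: "set (vs :: complex vec list) \<subseteq> carrier_vec N \<Longrightarrow> j < N \<Longrightarrow> (foldr (+) vs (0\<^sub>v N)) $ j = sum_list (map (\<lambda>v. v $ j) vs)"
proof (induct vs)
  case (Cons v vs)
  then show ?case using vsum_carrier[of vs N] by auto
qed auto

lemma mult_vec_as_sum: assumes P: "(P :: complex mat) \<in> carrier_mat N N" and w: "w \<in> carrier_vec N"
  shows "P *\<^sub>v w = foldr (+) (map (\<lambda>i. w $ i \<cdot>\<^sub>v col P i) [0..<N]) (0\<^sub>v N)"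
proof (rule eq_vecI)
  have c: "set (map (\<lambda>i. w $ i \<cdot>\<^sub>v col P i) [0..<N]) \<subseteq> carrier_vec N" using P by auto
  show "dim_vec (P *\<^sub>v w) = dim_vec (foldr (+) (map (\<lambda>i. w $ i \<cdot>\<^sub>v col P i) [0..<N]) (0\<^sub>v N))"
    using vsum_carrier[OF c] P by auto
  fix j assume "j < dim_vec (foldr (+) (map (\<lambda>i. w $ i \<cdot>\<^sub>v col P i) [0..<N]) (0\<^sub>v N))"
  hence j: "j < N" using vsum_carrier[OF c] by auto
  have "(foldr (+) (map (\<lambda>i. w $ i \<cdot>\<^sub>v col P i) [0..<N]) (0\<^sub>v N)) $ j = 
    sum_list (map (\<lambda>i. w $ i * P $$ (j, i)) [0..<N])"
    unfolding vsum_index[OF c j] map_map o_def using j P by (intro arg_cong[of _ _ sum_list], auto)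
  also have "\<dots> = (\<Sum>i = 0..<N. w $ i * P $$ (j, i))"
    by (subst sum_list_distinct_conv_sum_set, auto)
  also have "\<dots> = (P *\<^sub>v w) $ j" using P w j by (auto simp: scalar_prod_def mult.commute)
  finally show "(P *\<^sub>v w) $ j = (foldr (+) (map (\<lambda>i. w $ i \<cdot>\<^sub>v col P i) [0..<N]) (0\<^sub>v N)) $ j" by (rule sym)
qed

lemma vsum_in_lspan: assumes c: "\<And>i. i \<in> set is \<Longrightarrow> b i \<in> carrier_vec N"
  shows "foldr (+) (map (\<lambda>i. c i \<cdot>\<^sub>v b i) is) (0\<^sub>v N) \<in> lspan N (map b is)"
  using c
proof (induct "is")
  case (Cons i "is")
  then show ?case by auto
qed auto

context fixes N :: nat and M :: "complex mat" assumes M: "M \<in> carrier_mat N N"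
  and noimag: "\<And>z. eigenvalue M z \<Longrightarrow> Re z \<noteq> 0"
begin

lemma jordan_split: "\<exists>L. set L \<subseteq> carrier_vec N \<and> set L \<subseteq> spectral_subspace N M (\<lambda>z. Re z < 0) \<and> 
  (\<forall>v\<in>carrier_vec N. \<exists>vn vp. vn \<in> lspan N L \<and> vp \<in> spectral_subspace N M (\<lambda>z. Re z > 0) \<and> v = vn + vp)"
proof -
  from jordan_basis[OF M] obtain P Q lam where P: "P \<in> carrier_mat N N" and Q: "Q \<in> carrier_mat N N"
    and PQ: "P * Q = 1\<^sub>m N" and ge: "\<forall>i<N. gen_eigvec N M (lam i) (col P i)" by auto
  let ?p = "\<lambda>i. Re (lam i) < 0"
  define L where "L = map (col P) (filter ?p [0..<N])"
  have Lc: "set L \<subseteq> carrier_vec N" unfolding L_def using P by auto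
  have LD: "set L \<subseteq> spectral_subspace N M (\<lambda>z. Re z < 0)" unfolding L_def
    using ge by (auto intro!: ss_gen[OF M])
  show ?thesis
  proof (intro exI[of _ L] conjI Lc LD ballI)
    fix v :: "complex vec" assume v: "v \<in> carrier_vec N"
    define w where "w = Q *\<^sub>v v"
    have wc: "w \<in> carrier_vec N" unfolding w_def using Q v by auto
    have "v = P *\<^sub>v w" unfolding w_def using P Q v PQ by (simp add: assoc_mult_mat_vec[symmetric, of _ N N _ N])
    also have "\<dots> = foldr (+) (map (\<lambda>i. w $ i \<cdot>\<^sub>v col P i) [0..<N]) (0\<^sub>v N)" by (rule mult_vec_as_sum[OF P wc])
    also have "\<dots> = foldr (+) (map (\<lambda>i. w $ i \<cdot>\<^sub>v col P i) (filter ?p [0..<N])) (0\<^sub>v N) + 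
      foldr (+) (map (\<lambda>i. w $ i \<cdot>\<^sub>v col P i) (filter (\<lambda>i. \<not> ?p i) [0..<N])) (0\<^sub>v N)"
      by (rule vsum_filter_split, insert P, auto)
    finally have vsplit: "v = \<dots>" .
    have vn: "foldr (+) (map (\<lambda>i. w $ i \<cdot>\<^sub>v col P i) (filter ?p [0..<N])) (0\<^sub>v N) \<in> lspan N L"
      unfolding L_def by (rule vsum_in_lspan, insert P, auto)
    have vp: "foldr (+) (map (\<lambda>i. w $ i \<cdot>\<^sub>v col P i) (filter (\<lambda>i. \<not> ?p i) [0..<N])) (0\<^sub>v N) 
        \<in> spectral_subspace N M (\<lambda>z. Re z > 0)"
      unfolding spectral_subspace_def
    proof (intro CollectI exI[of _ "map (\<lambda>i. w $ i \<cdot>\<^sub>v col P i) (filter (\<lambda>i. \<not> ?p i) [0..<N])"] conjI ballI)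
      fix u assume "u \<in> set (map (\<lambda>i. w $ i \<cdot>\<^sub>v col P i) (filter (\<lambda>i. \<not> ?p i) [0..<N]))"
      then obtain i where i: "i < N" "\<not> ?p i" and u: "u = w $ i \<cdot>\<^sub>v col P i" by auto
      have g: "gen_eigvec N M (lam i) u" unfolding u using ge_smult[OF M, of "lam i" "col P i" "w $ i"] ge i by auto
      show "\<exists>z. 0 < Re z \<and> gen_eigvec N M z u"
      proof (cases "u = 0\<^sub>v N")
        case True
        thus ?thesis using ge_zero[OF M] by (intro exI[of _ 1], auto)
      next
        case False
        from noimag[OF ge_eigenvalue[OF M g False]] i show ?thesis using g by (intro exI[of _ "lam i"], auto)
      qed
    qed simp
    show "\<exists>vn vp. vn \<in> lspan N L \<and> vp \<in> spectral_subspace N M (\<lambda>z. Re z > 0) \<and> v = vn + vp"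
      by (rule exI, rule exI, rule conjI[OF vn conjI[OF vp vsplit]])
  qed
qed

lemma ss_disjoint: assumes xn: "x \<in> spectral_subspace N M Pn" and xp: "x \<in> spectral_subspace N M Pp"
  and disj: "\<And>z. Pn z \<Longrightarrow> Pp z \<Longrightarrow> False"
  shows "x = 0\<^sub>v N"
proof (rule ccontr)
  assume x0: "x \<noteq> 0\<^sub>v N"
  from ss_kill[OF M xn] obtain cs where cs: "\<forall>c\<in>set cs. Pn c" "opl N M cs *\<^sub>v x = 0\<^sub>v N" by auto
  have "\<exists>c\<in>set cs. \<exists>w\<in>spectral_subspace N M Pp. w \<noteq> 0\<^sub>v N \<and> M *\<^sub>v w = c \<cdot>\<^sub>v w"
    by (rule extract_eig[OF M _ _ xp x0 cs(2)], insert ss_carrier[OF M] ss_charm[OF M], auto)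
  then obtain c w where c: "Pn c" and wK: "w \<in> spectral_subspace N M Pp" and w0: "w \<noteq> 0\<^sub>v N"
    and Mw: "M *\<^sub>v w = c \<cdot>\<^sub>v w" using cs by auto
  have wc: "w \<in> carrier_vec N" using ss_carrier[OF M wK] .
  from ss_kill[OF M wK] obtain ds where ds: "\<forall>d\<in>set ds. Pp d" "opl N M ds *\<^sub>v w = 0\<^sub>v N" by auto
  have e: "(\<Prod>x\<leftarrow>ds. (c - x)) \<cdot>\<^sub>v w = 0\<^sub>v N" using ds(2) opl_eig[OF M wc Mw] by simp
  have nz: "(\<Prod>x\<leftarrow>ds. (c - x)) \<noteq> 0" 
    using ds(1) disj c by (auto simp: prod_list_zero_iff, blast)
  have "w = 0\<^sub>v N"
  proof (rule eq_vecI)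
    fix i assume "i < dim_vec (0\<^sub>v N :: complex vec)"
    hence i: "i < N" by simp
    have "((\<Prod>x\<leftarrow>ds. (c - x)) \<cdot>\<^sub>v w) $ i = 0" unfolding e using i by simp
    hence "(\<Prod>x\<leftarrow>ds. (c - x)) * w $ i = 0" using i wc by simp
    thus "w $ i = 0\<^sub>v N $ i" using nz i by simp
  qed (insert wc, auto)
  thus False using w0 by auto
qed

lemma D_lspan: "\<exists>L. set L \<subseteq> carrier_vec N \<and> spectral_subspace N M (\<lambda>z. Re z < 0) = lspan N L
  \<and> (\<forall>v\<in>carrier_vec N. \<exists>vn vp. vn \<in> spectral_subspace N M (\<lambda>z. Re z < 0) \<and> 
       vp \<in> spectral_subspace N M (\<lambda>z. Re z > 0) \<and> v = vn + vp)"
proof -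
  let ?D = "spectral_subspace N M (\<lambda>z. Re z < 0)"
  let ?E = "spectral_subspace N M (\<lambda>z. Re z > 0)"
  from jordan_split obtain L where Lc: "set L \<subseteq> carrier_vec N" and LD: "set L \<subseteq> ?D"
    and split: "\<forall>v\<in>carrier_vec N. \<exists>vn vp. vn \<in> lspan N L \<and> vp \<in> ?E \<and> v = vn + vp" by auto
  have sub: "lspan N L \<subseteq> ?D"
    by (rule lspan_subset[OF Lc ss_zero[OF M] ss_add[OF M] ss_smult[OF M] LD])
  have "?D = lspan N L"
  proof
    show "?D \<subseteq> lspan N L"
    proof
      fix d assume d: "d \<in> ?D"
      hence dc: "d \<in> carrier_vec N" by (rule ss_carrier[OF M])
      from split dc obtain dn dp where dn: "dn \<in> lspan N L" and dp: "dp \<in> ?E" and dd: "d = dn + dp" by auto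
      have dnc: "dn \<in> carrier_vec N" using lspan_carrier[OF Lc dn] .
      have dpc: "dp \<in> carrier_vec N" using ss_carrier[OF M dp] .
      have "dp = d - dn" unfolding dd using dnc dpc by (intro eq_vecI, auto)
      hence dpD: "dp \<in> ?D" using ss_minus[OF M d] sub dn by auto
      have "dp = 0\<^sub>v N" by (rule ss_disjoint[OF dpD dp], auto)
      thus "d \<in> lspan N L" using dd dn dnc by simp
    qed
  qed (rule sub)
  moreover have "\<forall>v\<in>carrier_vec N. \<exists>vn vp. vn \<in> ?D \<and> vp \<in> ?E \<and> v = vn + vp"
  proof
    fix v :: "complex vec" assume "v \<in> carrier_vec N"
    with split obtain vn vp where a: "vn \<in> lspan N L" and b: "vp \<in> ?E" and c: "v = vn + vp" by blast
    from a sub have "vn \<in> ?D" by blast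
    with b c show "\<exists>vn vp. vn \<in> ?D \<and> vp \<in> ?E \<and> v = vn + vp" by blast
  qed
  ultimately show ?thesis using Lc by blast
qed

end

(* ---- part P8 ---- *)


definition Jm :: "nat \<Rightarrow> complex mat" where
  "Jm n = four_block_mat (0\<^sub>m n n) (1\<^sub>m n) (- 1\<^sub>m n) (0\<^sub>m n n)"

definition om :: "nat \<Rightarrow> complex vec \<Rightarrow> complex vec \<Rightarrow> complex" where
  "om n u w = ip u (Jm n *\<^sub>v w)"

lemma Jm_carrier[simp]: "Jm n \<in> carrier_mat (n+n) (n+n)" unfolding Jm_def by auto

lemma uminus_mult_vec: "X \<in> carrier_mat nr nc \<Longrightarrow> v \<in> carrier_vec nc \<Longrightarrow> (- X) *\<^sub>v v = - (X *\<^sub>v (v :: complex vec))"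
  by (intro eq_vecI, auto simp: scalar_prod_def sum_negf)

lemma Jvec: assumes a: "(a :: complex vec) \<in> carrier_vec n" and b: "b \<in> carrier_vec n" 
  shows "Jm n *\<^sub>v (a @\<^sub>v b) = b @\<^sub>v (- a)"
proof -
  have m: "- 1\<^sub>m n \<in> carrier_mat n n" by auto
  show ?thesis unfolding Jm_def four_block_mat_mult_vec[OF zero_carrier_mat one_carrier_mat m zero_carrier_mat a b]
    using a b by (intro eq_vecI, auto simp: uminus_mult_vec[of _ n n])
qed

lemma vec_first_append: "(a :: complex vec) \<in> carrier_vec n \<Longrightarrow> vec_first (a @\<^sub>v b) n = a"
  by (intro eq_vecI, auto simp: vec_first_def)

lemma vec_last_append: "(a :: complex vec) \<in> carrier_vec n \<Longrightarrow> b \<in> carrier_vec m \<Longrightarrow> vec_last (a @\<^sub>v b) m = b"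
  by (intro eq_vecI, auto simp: vec_last_def)

lemma split_vec: "(u :: complex vec) \<in> carrier_vec (n + n) \<Longrightarrow> \<exists>a b. a \<in> carrier_vec n \<and> b \<in> carrier_vec n \<and> u = a @\<^sub>v b"
  by (intro exI[of _ "vec_first u n"] exI[of _ "vec_last u n"], auto simp: vec_first_last_append)

context fixes n :: nat and A F G :: "complex mat"
  assumes A: "A \<in> carrier_mat n n" and F: "hermitian_mat n F" and G: "hermitian_mat n G"
begin

lemma Fc: "F \<in> carrier_mat n n" using F unfolding hermitian_mat_def by auto
lemma Gc: "G \<in> carrier_mat n n" using G unfolding hermitian_mat_def by auto
lemma Fa: "mat_adjoint F = F" using F unfolding hermitian_mat_def by auto
lemma Ga: "mat_adjoint G = G" using G unfolding hermitian_mat_def by auto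

lemma H_carrier: "hamiltonian A F G \<in> carrier_mat (n+n) (n+n)"
  unfolding hamiltonian_def using A Fc Gc by auto

lemma M_def: "mat_adjoint (hamiltonian A F G) = four_block_mat (mat_adjoint A) (- G) (- F) (- A)"
  unfolding hamiltonian_def using A Fc Gc 
  by (subst adj_four_block[of _ n n _ n _ n], auto simp: adj_uminus Fa Ga)

lemma M_carrier: "mat_adjoint (hamiltonian A F G) \<in> carrier_mat (n+n) (n+n)"
  using H_carrier by auto

lemma Mvec: "a \<in> carrier_vec n \<Longrightarrow> b \<in> carrier_vec n \<Longrightarrow> 
  mat_adjoint (hamiltonian A F G) *\<^sub>v (a @\<^sub>v b) = 
   (mat_adjoint A *\<^sub>v a + - (G *\<^sub>v b)) @\<^sub>v (- (F *\<^sub>v a) + - (A *\<^sub>v b))"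
proof -
  assume a: "a \<in> carrier_vec n" and b: "b \<in> carrier_vec n"
  have m: "mat_adjoint A \<in> carrier_mat n n" "- G \<in> carrier_mat n n" "- F \<in> carrier_mat n n" "- A \<in> carrier_mat n n"
    using A Fc Gc by auto
  show ?thesis unfolding M_def four_block_mat_mult_vec[OF m a b]
    using a b A Fc Gc by (simp add: uminus_mult_vec[of _ n n])
qed

lemma om_M: assumes u: "u \<in> carrier_vec (n+n)" and w: "w \<in> carrier_vec (n+n)"
  shows "om n (mat_adjoint (hamiltonian A F G) *\<^sub>v u) w = - om n u (mat_adjoint (hamiltonian A F G) *\<^sub>v w)"
proof -
  from split_vec[OF u] obtain a b where a: "a \<in> carrier_vec n" and b: "b \<in> carrier_vec n" and ub: "u = a @\<^sub>v b" by auto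
  from split_vec[OF w] obtain c d where c: "c \<in> carrier_vec n" and d: "d \<in> carrier_vec n" and wd: "w = c @\<^sub>v d" by auto
  let ?A = "mat_adjoint A"
  have Ac: "?A \<in> carrier_mat n n" using A by auto
  have I1: "ip (?A *\<^sub>v a) d = ip a (A *\<^sub>v d)" using ip_adj[OF A a d] by simp
  have I2: "ip (G *\<^sub>v b) d = ip b (G *\<^sub>v d)" using ip_adj[OF Gc b d] Ga by simp
  have I3: "ip (F *\<^sub>v a) c = ip a (F *\<^sub>v c)" using ip_adj[OF Fc a c] Fa by simp
  have I4: "ip (A *\<^sub>v b) c = ip b (?A *\<^sub>v c)" using ip_adj[OF Ac b c] by simp
  have c1: "?A *\<^sub>v a \<in> carrier_vec n" "G *\<^sub>v b \<in> carrier_vec n" "F *\<^sub>v a \<in> carrier_vec n" "A *\<^sub>v b \<in> carrier_vec n"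
    "?A *\<^sub>v c \<in> carrier_vec n" "G *\<^sub>v d \<in> carrier_vec n" "F *\<^sub>v c \<in> carrier_vec n" "A *\<^sub>v d \<in> carrier_vec n"
    by (rule mult_mat_vec_carrier[OF Ac a], rule mult_mat_vec_carrier[OF Gc b], rule mult_mat_vec_carrier[OF Fc a],
      rule mult_mat_vec_carrier[OF A b], rule mult_mat_vec_carrier[OF Ac c], rule mult_mat_vec_carrier[OF Gc d],
      rule mult_mat_vec_carrier[OF Fc c], rule mult_mat_vec_carrier[OF A d])
  have "om n (mat_adjoint (hamiltonian A F G) *\<^sub>v u) w = 
    ip (?A *\<^sub>v a + - (G *\<^sub>v b)) d + ip (- (F *\<^sub>v a) + - (A *\<^sub>v b)) (- c)"
    unfolding om_def ub wd Mvec[OF a b] Jvec[OF c d] using c1 c d by (subst ip_append[of _ n], auto)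
  also have "\<dots> = ip (?A *\<^sub>v a) d - ip (G *\<^sub>v b) d + ip (F *\<^sub>v a) c + ip (A *\<^sub>v b) c"
    using c1 c d by (simp add: ip_add_left[of _ n] ip_uminus_left ip_uminus_right[of _ n])
  finally have L: "om n (mat_adjoint (hamiltonian A F G) *\<^sub>v u) w = 
     ip a (A *\<^sub>v d) - ip b (G *\<^sub>v d) + ip a (F *\<^sub>v c) + ip b (?A *\<^sub>v c)" unfolding I1 I2 I3 I4 .
  have "om n u (mat_adjoint (hamiltonian A F G) *\<^sub>v w) = 
    ip a (- (F *\<^sub>v c) + - (A *\<^sub>v d)) + ip b (- (?A *\<^sub>v c + - (G *\<^sub>v d)))"
    unfolding om_def ub wd Mvec[OF c d] using c1 a b 
    by (subst Jvec[of _ n], auto, subst ip_append[of _ n], auto)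
  also have "\<dots> = - ip a (F *\<^sub>v c) - ip a (A *\<^sub>v d) - ip b (?A *\<^sub>v c) + ip b (G *\<^sub>v d)"
    using c1 a b by (simp add: ip_add_right[of _ n] ip_uminus_right[of _ n])
  finally have R: "om n u (mat_adjoint (hamiltonian A F G) *\<^sub>v w) = 
     - ip a (F *\<^sub>v c) - ip a (A *\<^sub>v d) - ip b (?A *\<^sub>v c) + ip b (G *\<^sub>v d)" .
  show ?thesis unfolding L R by (simp add: algebra_simps)
qed

end

(* ---- part P9 ---- *)


lemma Jm_vec_carrier[simp]: "w \<in> carrier_vec (n+n) \<Longrightarrow> Jm n *\<^sub>v w \<in> carrier_vec (n+n)"
  by (rule mult_mat_vec_carrier[OF Jm_carrier])

context fixes n :: nat
begin

lemma om_add_left: "u1 \<in> carrier_vec (n+n) \<Longrightarrow> u2 \<in> carrier_vec (n+n) \<Longrightarrow> w \<in> carrier_vec (n+n) \<Longrightarrow>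
  om n (u1 + u2) w = om n u1 w + om n u2 w"
  unfolding om_def by (rule ip_add_left[of _ "n+n"], auto)

lemma om_smult_left: "om n (c \<cdot>\<^sub>v u) w = cnj c * om n u w"
  unfolding om_def by (rule ip_smult_left)

lemma om_add_right: "u \<in> carrier_vec (n+n) \<Longrightarrow> w1 \<in> carrier_vec (n+n) \<Longrightarrow> w2 \<in> carrier_vec (n+n) \<Longrightarrow>
  om n u (w1 + w2) = om n u w1 + om n u w2"
  unfolding om_def by (subst mult_add_distrib_mat_vec[of _ "n+n" "n+n"], auto intro!: ip_add_right[of _ "n+n"])

lemma om_smult_right: "u \<in> carrier_vec (n+n) \<Longrightarrow> w \<in> carrier_vec (n+n) \<Longrightarrow>
  om n u (c \<cdot>\<^sub>v w) = c * om n u w"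
  unfolding om_def by (subst mult_mat_vec[of _ "n+n" "n+n"], auto intro!: ip_smult_right[of _ "n+n"])

lemma om_zero_left[simp]: "om n (0\<^sub>v m) w = 0"
  unfolding om_def by simp

lemma om_zero_right[simp]: "u \<in> carrier_vec (n+n) \<Longrightarrow> om n u (0\<^sub>v (n+n)) = 0"
  unfolding om_def by (subst mult_zero_v[of _ "n+n" "n+n"], auto)

lemma om_minus_right: "u \<in> carrier_vec (n+n) \<Longrightarrow> w1 \<in> carrier_vec (n+n) \<Longrightarrow> w2 \<in> carrier_vec (n+n) \<Longrightarrow>
  om n u (w1 - w2) = om n u w1 - om n u w2"
  unfolding om_def by (subst mult_minus_distrib_mat_vec[of _ "n+n" "n+n"], auto intro!: ip_minus_right[of _ "n+n"])

lemma om_self_J: "w \<in> carrier_vec (n+n) \<Longrightarrow> om n (Jm n *\<^sub>v w) w = ip (Jm n *\<^sub>v w) (Jm n *\<^sub>v w)"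
  unfolding om_def ..

context fixes M :: "complex mat" assumes M: "M \<in> carrier_mat (n+n) (n+n)"
  and skew: "\<And>u w. u \<in> carrier_vec (n+n) \<Longrightarrow> w \<in> carrier_vec (n+n) \<Longrightarrow> om n (M *\<^sub>v u) w = - om n u (M *\<^sub>v w)"
begin

lemma iso_pow: "u \<in> carrier_vec (n+n) \<Longrightarrow> w \<in> carrier_vec (n+n) \<Longrightarrow> 
  ((M - z \<cdot>\<^sub>m 1\<^sub>m (n+n)) ^\<^sub>m k) *\<^sub>v u = 0\<^sub>v (n+n) \<Longrightarrow> 
  ((M - z' \<cdot>\<^sub>m 1\<^sub>m (n+n)) ^\<^sub>m k') *\<^sub>v w = 0\<^sub>v (n+n) \<Longrightarrow> cnj z + z' \<noteq> 0 \<Longrightarrow> om n u w = 0"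
proof (induct k arbitrary: u k' w)
  case 0
  then show ?case by simp
next
  case (Suc k)
  note outer = Suc(1)
  show ?case using Suc(2-)
  proof (induct k' arbitrary: w)
    case 0
    then show ?case by simp
  next
    case (Suc k')
    let ?T = "M - z \<cdot>\<^sub>m 1\<^sub>m (n+n)" let ?T' = "M - z' \<cdot>\<^sub>m 1\<^sub>m (n+n)"
    have T: "?T \<in> carrier_mat (n+n) (n+n)" "?T' \<in> carrier_mat (n+n) (n+n)" using M by auto
    have u: "u \<in> carrier_vec (n+n)" and w: "w \<in> carrier_vec (n+n)" using Suc by auto
    define u' where "u' = ?T *\<^sub>v u" define w' where "w' = ?T' *\<^sub>v w"
    have u'c: "u' \<in> carrier_vec (n+n)" "w' \<in> carrier_vec (n+n)" unfolding u'_def w'_def using T u w by auto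
    have "((?T ^\<^sub>m k) * ?T) *\<^sub>v u = 0\<^sub>v (n+n)" using Suc(4) by simp
    hence ku: "(?T ^\<^sub>m k) *\<^sub>v u' = 0\<^sub>v (n+n)" unfolding u'_def using T u 
      by (simp add: assoc_mult_mat_vec[of _ "n+n" "n+n" _ "n+n"])
    have "((?T' ^\<^sub>m k') * ?T') *\<^sub>v w = 0\<^sub>v (n+n)" using Suc(5) by simp
    hence kw: "(?T' ^\<^sub>m k') *\<^sub>v w' = 0\<^sub>v (n+n)" unfolding w'_def using T w 
      by (simp add: assoc_mult_mat_vec[of _ "n+n" "n+n" _ "n+n"])
    have o1: "om n u' w = 0" by (rule outer[OF u'c(1) w ku Suc(5) Suc(6)])
    have o2: "om n u w' = 0" by (rule Suc(1)[OF u u'c(2) Suc(4) kw Suc(6)])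
    have Mu: "M *\<^sub>v u = z \<cdot>\<^sub>v u + u'" unfolding u'_def charm_mult_vec[OF M u] using M u
      by (intro eq_vecI, auto)
    have Mw: "M *\<^sub>v w = z' \<cdot>\<^sub>v w + w'" unfolding w'_def charm_mult_vec[OF M w] using M w
      by (intro eq_vecI, auto)
    have "om n (M *\<^sub>v u) w = cnj z * om n u w" unfolding Mu 
      using u w u'c by (simp add: om_add_left om_smult_left o1)
    moreover have "om n u (M *\<^sub>v w) = z' * om n u w" unfolding Mw
      using u w u'c by (simp add: om_add_right om_smult_right o2)
    ultimately have "cnj z * om n u w = - (z' * om n u w)" using skew[OF u w] by simp
    hence "(cnj z + z') * om n u w = 0" by (simp add: algebra_simps)
    thus ?case using Suc(6) by simp
  qed
qed

lemma iso_ge: "gen_eigvec (n+n) M z u \<Longrightarrow> gen_eigvec (n+n) M z' w \<Longrightarrow> cnj z + z' \<noteq> 0 \<Longrightarrow> om n u w = 0"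
  unfolding gen_eigvec_def using iso_pow by blast

lemma iso_ss: assumes x: "x \<in> spectral_subspace (n+n) M P" and y: "y \<in> spectral_subspace (n+n) M P'"
  and nz: "\<And>z z'. P z \<Longrightarrow> P' z' \<Longrightarrow> cnj z + z' \<noteq> 0"
  shows "om n x y = 0"
proof -
  from x obtain vs where vs: "\<forall>v \<in> set vs. \<exists>z. P z \<and> gen_eigvec (n+n) M z v" "x = foldr (+) vs (0\<^sub>v (n+n))"
    unfolding spectral_subspace_def by auto
  from y obtain ws where ws: "\<forall>v \<in> set ws. \<exists>z. P' z \<and> gen_eigvec (n+n) M z v" "y = foldr (+) ws (0\<^sub>v (n+n))"
    unfolding spectral_subspace_def by auto
  have one: "\<And>v. \<exists>z. P z \<and> gen_eigvec (n+n) M z v \<Longrightarrow> om n v y = 0"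
  proof -
    fix v assume "\<exists>z. P z \<and> gen_eigvec (n+n) M z v"
    then obtain z where z: "P z" and v: "gen_eigvec (n+n) M z v" by auto
    have vc: "v \<in> carrier_vec (n+n)" using v unfolding gen_eigvec_def by auto
    have "\<forall>w\<in>set ws. om n v w = 0" using ws(1) iso_ge[OF v] nz[OF z] by blast
    hence "om n v (foldr (+) ws (0\<^sub>v (n+n))) = 0" using ws(1)
    proof (induct ws)
      case (Cons w ws)
      have wc: "w \<in> carrier_vec (n+n)" using Cons(3) unfolding gen_eigvec_def by auto
      have sc: "foldr (+) ws (0\<^sub>v (n+n)) \<in> carrier_vec (n+n)" 
        by (rule vsum_carrier, insert Cons(3), auto simp: gen_eigvec_def)
      show ?case using Cons vc wc sc by (simp add: om_add_right)
    qed (insert vc, simp)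
    thus "om n v y = 0" using ws(2) by simp
  qed
  have yc: "y \<in> carrier_vec (n+n)" using ss_carrier[OF M y] .
  have "om n (foldr (+) vs (0\<^sub>v (n+n))) y = 0" using vs(1)
  proof (induct vs)
    case (Cons v vs)
    have vc: "v \<in> carrier_vec (n+n)" using Cons(2) unfolding gen_eigvec_def by auto
    have sc: "foldr (+) vs (0\<^sub>v (n+n)) \<in> carrier_vec (n+n)" 
      by (rule vsum_carrier, insert Cons(2), auto simp: gen_eigvec_def)
    show ?case using Cons vc sc yc one[of v] by (simp add: om_add_left)
  qed simp
  thus ?thesis using vs(2) by simp
qed

end
end

(* ---- part P10 ---- *)


lemma psd_zero: assumes G: "psd_mat n G" and y: "y \<in> carrier_vec n" and e: "ip y (G *\<^sub>v y) = 0"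
  shows "G *\<^sub>v y = 0\<^sub>v n"
proof -
  have Gc: "G \<in> carrier_mat n n" and Ga: "mat_adjoint G = G" using G unfolding psd_mat_def hermitian_mat_def by auto
  have pos: "\<And>v. v \<in> carrier_vec n \<Longrightarrow> 0 \<le> Re (ip v (G *\<^sub>v v))"
    using G unfolding psd_mat_def by (auto simp: ip_sprod_c[OF _ Gc])
  define g where "g = G *\<^sub>v y"
  have gc: "g \<in> carrier_vec n" unfolding g_def using Gc y by auto
  have Ggc: "G *\<^sub>v g \<in> carrier_vec n" using Gc gc by auto
  define s where "s = Re (ip g g)"
  define r where "r = Re (ip g (G *\<^sub>v g))"
  have s0: "0 \<le> s" unfolding s_def ip_self_Re by (auto intro: sum_nonneg)
  have r0: "0 \<le> r" unfolding r_def using pos[OF gc] .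
  have yg: "ip y g = 0" unfolding g_def using e .
  have yGg: "ip y (G *\<^sub>v g) = ip g g" using ip_adj[OF Gc y gc] Ga unfolding g_def by simp
  have key: "\<And>t :: real. 0 \<le> 2 * t * s + t^2 * r"
  proof -
    fix t :: real
    let ?t = "complex_of_real t"
    let ?v = "y + ?t \<cdot>\<^sub>v g"
    have vc: "?v \<in> carrier_vec n" using y gc by auto
    have Gv: "G *\<^sub>v ?v = g + ?t \<cdot>\<^sub>v (G *\<^sub>v g)" 
      unfolding g_def using Gc y gc by (simp add: mult_add_distrib_mat_vec[of _ n n] mult_mat_vec[of _ n n])
    have "ip ?v (G *\<^sub>v ?v) = ip y g + ?t * ip y (G *\<^sub>v g) + cnj ?t * ip g g + cnj ?t * ?t * ip g (G *\<^sub>v g)"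
      unfolding Gv using y gc Ggc
      by (simp add: ip_add_left[of _ n] ip_add_right[of _ n] ip_smult_left ip_smult_right[of _ n] algebra_simps)
    also have "\<dots> = 2 * ?t * ip g g + ?t^2 * ip g (G *\<^sub>v g)" unfolding yg yGg by (simp add: power2_eq_square)
    finally have "Re (ip ?v (G *\<^sub>v ?v)) = 2 * t * s + t^2 * r" unfolding s_def r_def by simp
    thus "0 \<le> 2 * t * s + t^2 * r" using pos[OF vc] by simp
  qed
  have "s = 0"
  proof (rule ccontr)
    assume "s \<noteq> 0"
    hence sp: "s > 0" using s0 by auto
    have r1: "r + 1 > 0" using r0 by auto
    have "0 \<le> 2 * (- s / (r + 1)) * s + (- s / (r + 1))^2 * r" by (rule key)
    hence "0 \<le> (2 * (- s / (r + 1)) * s + (- s / (r + 1))^2 * r) * (r + 1)^2" using r1 by simp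
    also have "\<dots> = - (s * s) * (r + 2)"
    proof -
      define q where "q = r + 1"
      have q: "q \<noteq> 0" unfolding q_def using r1 by auto
      have e1: "(- s / q)^2 * q^2 = s * s" using q by (simp add: power2_eq_square field_simps)
      have e2: "(- s / q) * q = - s" using q by simp
      have "(2 * (- s / q) * s + (- s / q)^2 * r) * q^2 = 2 * ((- s / q) * q) * s * q + ((- s / q)^2 * q^2) * r"
        by (simp add: power2_eq_square algebra_simps)
      also have "\<dots> = - (s * s) * (r + 2)" unfolding e1 e2 by (simp add: q_def algebra_simps)
      finally show ?thesis unfolding q_def .
    qed
    finally have "(s * s) * (r + 2) \<le> 0" by simp
    moreover have "(s * s) * (r + 2) > 0" using sp r0 by simp
    ultimately show False by simp
  qed
  hence "ip g g = 0" unfolding s_def using ip_self_Im[of g] by (simp add: complex_eq_iff)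
  thus ?thesis using ip_self_eq_0[OF gc] unfolding g_def by simp
qed


(* ---- part P11 ---- *)


lemma uminus_zero_v[simp]: "- (0\<^sub>v n :: complex vec) = 0\<^sub>v n" by (intro eq_vecI, auto)
lemma uminus_uminus_v[simp]: "- (- (x :: complex vec)) = x" by (intro eq_vecI, auto)

context fixes n :: nat and A F G M :: "complex mat"
  assumes A: "A \<in> carrier_mat n n" and F: "psd_mat n F" and G: "psd_mat n G" and stable: "stable_mat A"
  and M_def: "M = mat_adjoint (hamiltonian A F G)"
begin

lemma Fh: "hermitian_mat n F" using F unfolding psd_mat_def by auto
lemma Gh: "hermitian_mat n G" using G unfolding psd_mat_def by auto
lemma Gc11: "G \<in> carrier_mat n n" using Gh unfolding hermitian_mat_def by auto
lemma Fc11: "F \<in> carrier_mat n n" using Fh unfolding hermitian_mat_def by auto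

lemma Mc: "M \<in> carrier_mat (n+n) (n+n)" unfolding M_def by (rule M_carrier[OF A Fh Gh])

lemma skew: "u \<in> carrier_vec (n+n) \<Longrightarrow> w \<in> carrier_vec (n+n) \<Longrightarrow> om n (M *\<^sub>v u) w = - om n u (M *\<^sub>v w)"
  unfolding M_def by (rule om_M[OF A Fh Gh])

lemma isoD: assumes "x \<in> spectral_subspace (n+n) M (\<lambda>z. Re z < 0)" "y \<in> spectral_subspace (n+n) M (\<lambda>z. Re z < 0)"
  shows "om n x y = 0"
  by (rule iso_ss[OF Mc skew assms(1) assms(2)]) (auto simp: complex_eq_iff)

lemma isoE: assumes "x \<in> spectral_subspace (n+n) M (\<lambda>z. Re z > 0)" "y \<in> spectral_subspace (n+n) M (\<lambda>z. Re z > 0)"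
  shows "om n x y = 0"
  by (rule iso_ss[OF Mc skew assms(1) assms(2)]) (auto simp: complex_eq_iff)

lemma Mform: "y \<in> carrier_vec n \<Longrightarrow> M *\<^sub>v (0\<^sub>v n @\<^sub>v y) = (- (G *\<^sub>v y)) @\<^sub>v (- (A *\<^sub>v y))"
  unfolding M_def using A Fc11 Gc11 by (subst Mvec[OF A Fh Gh], auto)

lemma omform: assumes y: "y \<in> carrier_vec n" shows "om n (0\<^sub>v n @\<^sub>v y) (M *\<^sub>v (0\<^sub>v n @\<^sub>v y)) = ip y (G *\<^sub>v y)"
proof -
  have c: "G *\<^sub>v y \<in> carrier_vec n" "A *\<^sub>v y \<in> carrier_vec n" using y A Gc11 by auto
  show ?thesis unfolding om_def Mform[OF y] using c y
    by (subst Jvec[of _ n], auto, subst ip_append[of _ n], auto simp: ip_uminus_right[of _ n])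
qed

abbreviation "DD \<equiv> spectral_subspace (n+n) M (\<lambda>z. Re z < 0)"
abbreviation "EE \<equiv> spectral_subspace (n+n) M (\<lambda>z. Re z > 0)"

lemma top_form: "d \<in> carrier_vec (n+n) \<Longrightarrow> vec_first d n = 0\<^sub>v n \<Longrightarrow> d = 0\<^sub>v n @\<^sub>v vec_last d n"
  using vec_first_last_append[of d n n] by simp

lemma K_closed: assumes d: "d \<in> DD" and d0: "vec_first d n = 0\<^sub>v n"
  shows "(M - c \<cdot>\<^sub>m 1\<^sub>m (n+n)) *\<^sub>v d \<in> DD \<and> vec_first ((M - c \<cdot>\<^sub>m 1\<^sub>m (n+n)) *\<^sub>v d) n = 0\<^sub>v n"
proof -
  have dc: "d \<in> carrier_vec (n+n)" by (rule ss_carrier[OF Mc d])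
  define y where "y = vec_last d n"
  have y: "y \<in> carrier_vec n" unfolding y_def using dc by auto
  have dy: "d = 0\<^sub>v n @\<^sub>v y" unfolding y_def by (rule top_form[OF dc d0])
  have "om n d (M *\<^sub>v d) = 0" by (rule isoD[OF d ss_mult[OF Mc d]])
  hence "ip y (G *\<^sub>v y) = 0" using omform[OF y] dy by simp
  hence Gy: "G *\<^sub>v y = 0\<^sub>v n" by (rule psd_zero[OF G y])
  have Md: "M *\<^sub>v d = 0\<^sub>v n @\<^sub>v (- (A *\<^sub>v y))" unfolding dy Mform[OF y] Gy by simp
  have Ayc: "- (A *\<^sub>v y) \<in> carrier_vec n" using A y by auto
  have Ayd: "dim_vec (A *\<^sub>v y) = n" using A y by auto
  have eq: "(M - c \<cdot>\<^sub>m 1\<^sub>m (n+n)) *\<^sub>v d = 0\<^sub>v n @\<^sub>v (- (A *\<^sub>v y) - c \<cdot>\<^sub>v y)"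
    unfolding charm_mult_vec[OF Mc dc] Md unfolding dy using Ayc Ayd y
    by (intro eq_vecI, auto)
  show ?thesis
  proof
    show "(M - c \<cdot>\<^sub>m 1\<^sub>m (n+n)) *\<^sub>v d \<in> DD" by (rule ss_charm[OF Mc d])
    show "vec_first ((M - c \<cdot>\<^sub>m 1\<^sub>m (n+n)) *\<^sub>v d) n = 0\<^sub>v n" unfolding eq by (rule vec_first_append, auto)
  qed
qed

lemma top_zero: assumes d: "d \<in> DD" and d0: "vec_first d n = 0\<^sub>v n" shows "d = 0\<^sub>v (n+n)"
proof (rule ccontr)
  assume dn0: "d \<noteq> 0\<^sub>v (n+n)"
  let ?K = "{d. d \<in> DD \<and> vec_first d n = 0\<^sub>v n}"
  from ss_kill[OF Mc d] obtain cs where cs: "\<forall>c\<in>set cs. Re c < 0" "opl (n+n) M cs *\<^sub>v d = 0\<^sub>v (n+n)" by auto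
  have "\<exists>c\<in>set cs. \<exists>w\<in>?K. w \<noteq> 0\<^sub>v (n+n) \<and> M *\<^sub>v w = c \<cdot>\<^sub>v w"
  proof (rule extract_eig[OF Mc _ _ _ dn0 cs(2)])
    show "?K \<subseteq> carrier_vec (n+n)" using ss_carrier[OF Mc] by auto
    show "d \<in> ?K" using d d0 by auto
    fix c x assume "x \<in> ?K"
    thus "(M - c \<cdot>\<^sub>m 1\<^sub>m (n+n)) *\<^sub>v x \<in> ?K" using K_closed[of x c] by auto
  qed
  then obtain c w where c: "Re c < 0" and wD: "w \<in> DD" and w0: "vec_first w n = 0\<^sub>v n"
    and wn0: "w \<noteq> 0\<^sub>v (n+n)" and Mw: "M *\<^sub>v w = c \<cdot>\<^sub>v w" using cs by auto
  have wc: "w \<in> carrier_vec (n+n)" by (rule ss_carrier[OF Mc wD])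
  define y where "y = vec_last w n"
  have y: "y \<in> carrier_vec n" unfolding y_def using wc by auto
  have wy: "w = 0\<^sub>v n @\<^sub>v y" unfolding y_def by (rule top_form[OF wc w0])
  have "vec_last (M *\<^sub>v w) n = - (A *\<^sub>v y)" unfolding wy Mform[OF y] using A Gc11 y
    by (intro vec_last_append[of _ n], auto)
  moreover have "vec_last (c \<cdot>\<^sub>v w) n = c \<cdot>\<^sub>v y" unfolding wy using y 
    by (intro eq_vecI, auto simp: vec_last_def)
  ultimately have "- (A *\<^sub>v y) = c \<cdot>\<^sub>v y" using Mw by simp
  hence e: "\<And>i. i < n \<Longrightarrow> (- (A *\<^sub>v y)) $ i = (c \<cdot>\<^sub>v y) $ i" by simp
  have Ay: "A *\<^sub>v y = (- c) \<cdot>\<^sub>v y"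
  proof (rule eq_vecI)
    fix i assume "i < dim_vec ((- c) \<cdot>\<^sub>v y)"
    hence i: "i < n" using y by simp
    from e[OF i] have "- ((A *\<^sub>v y) $ i) = c * y $ i" using i A y by simp
    hence "(A *\<^sub>v y) $ i = - (c * y $ i)" by (metis minus_minus)
    thus "(A *\<^sub>v y) $ i = ((- c) \<cdot>\<^sub>v y) $ i" using i y by simp
  qed (insert A y, auto)
  have y0: "y \<noteq> 0\<^sub>v n" using wn0 wy by auto
  have "eigenvalue A (- c)" unfolding eigenvalue_def eigenvector_def using A y y0 Ay
    by (intro exI[of _ y], auto)
  hence "Re (- c) < 0" using stable unfolding stable_mat_def by auto
  thus False using c by auto
qed

end

(* ---- part P12 ---- *)


lemma vec_first_zero[simp]: "vec_first (0\<^sub>v (n+m) :: complex vec) n = 0\<^sub>v n"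
  by (intro eq_vecI, auto simp: vec_first_def)
lemma vec_last_zero[simp]: "vec_last (0\<^sub>v (n+m) :: complex vec) m = 0\<^sub>v m"
  by (intro eq_vecI, auto simp: vec_last_def)

context fixes n :: nat and A F G M :: "complex mat"
  assumes A: "A \<in> carrier_mat n n" and F: "psd_mat n F" and G: "psd_mat n G" and stable: "stable_mat A"
  and M_def: "M = mat_adjoint (hamiltonian A F G)"
  and noimag: "\<And>z. eigenvalue M z \<Longrightarrow> Re z \<noteq> 0"
begin

lemmas Mc' = Mc[OF A F G stable M_def]

lemma dec: "v \<in> carrier_vec (n+n) \<Longrightarrow> \<exists>vn vp. vn \<in> spectral_subspace (n+n) M (\<lambda>z. Re z < 0) \<and> 
  vp \<in> spectral_subspace (n+n) M (\<lambda>z. Re z > 0) \<and> v = vn + vp"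
  using D_lspan[OF Mc' noimag] by blast

lemma bot_zero: assumes u: "u \<in> carrier_vec (n+n)" and u0: "vec_last u n = 0\<^sub>v n" 
  and orth: "\<And>d. d \<in> spectral_subspace (n+n) M (\<lambda>z. Re z < 0) \<Longrightarrow> ip d u = 0" 
  shows "u = 0\<^sub>v (n+n)"
proof -
  let ?D = "spectral_subspace (n+n) M (\<lambda>z. Re z < 0)"
  let ?E = "spectral_subspace (n+n) M (\<lambda>z. Re z > 0)"
  define x where "x = vec_first u n"
  have x: "x \<in> carrier_vec n" unfolding x_def using u by auto
  have ux: "u = x @\<^sub>v 0\<^sub>v n" unfolding x_def using vec_first_last_append[of u n n] u u0 by simp
  define z where "z = 0\<^sub>v n @\<^sub>v x"
  have zc: "z \<in> carrier_vec (n+n)" unfolding z_def using x by auto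
  have Jz: "Jm n *\<^sub>v z = u" unfolding z_def ux by (subst Jvec[of _ n], insert x, auto)
  from dec[OF zc] obtain zn zp where zn: "zn \<in> ?D" and zp: "zp \<in> ?E" and zz: "z = zn + zp" by auto
  have znc: "zn \<in> carrier_vec (n+n)" by (rule ss_carrier[OF Mc' zn])
  have zpc: "zp \<in> carrier_vec (n+n)" by (rule ss_carrier[OF Mc' zp])
  have zp_eq: "zp = z - zn" unfolding zz using znc zpc by (intro eq_vecI, auto)
  have omall: "\<And>v. v \<in> carrier_vec (n+n) \<Longrightarrow> om n v zp = 0"
  proof -
    fix v :: "complex vec" assume v: "v \<in> carrier_vec (n+n)"
    from dec[OF v] obtain vn vp where vn: "vn \<in> ?D" and vp: "vp \<in> ?E" and vv: "v = vn + vp" by auto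
    have vnc: "vn \<in> carrier_vec (n+n)" by (rule ss_carrier[OF Mc' vn])
    have vpc: "vp \<in> carrier_vec (n+n)" by (rule ss_carrier[OF Mc' vp])
    have "om n vp zp = 0" by (rule isoE[OF A F G stable M_def vp zp])
    moreover have "om n vn zp = 0"
    proof -
      have "om n vn zp = om n vn z - om n vn zn" unfolding zp_eq by (rule om_minus_right[OF vnc zc znc])
      also have "om n vn zn = 0" by (rule isoD[OF A F G stable M_def vn zn])
      also have "om n vn z = ip vn u" unfolding om_def Jz ..
      also have "ip vn u = 0" by (rule orth[OF vn])
      finally show ?thesis by simp
    qed
    ultimately show "om n v zp = 0" unfolding vv using vnc vpc zpc by (simp add: om_add_left)
  qed
  have Jzpc: "Jm n *\<^sub>v zp \<in> carrier_vec (n+n)" using zpc by simp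
  have "ip (Jm n *\<^sub>v zp) (Jm n *\<^sub>v zp) = 0" using omall[OF Jzpc] unfolding om_def .
  hence J0: "Jm n *\<^sub>v zp = 0\<^sub>v (n+n)" by (rule ip_self_eq_0[OF Jzpc])
  obtain a b where a: "a \<in> carrier_vec n" and b: "b \<in> carrier_vec n" and zab: "zp = a @\<^sub>v b" 
    using split_vec[OF zpc] by auto
  have "b @\<^sub>v (- a) = 0\<^sub>v (n+n)" using J0 unfolding zab Jvec[OF a b] .
  hence "vec_first (b @\<^sub>v (- a)) n = vec_first (0\<^sub>v (n+n)) n" "vec_last (b @\<^sub>v (- a)) n = vec_last (0\<^sub>v (n+n)) n" by auto
  hence "b = 0\<^sub>v n" "- a = 0\<^sub>v n" using a b by (auto simp: vec_first_append vec_last_append[of _ n])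
  hence bz: "b = 0\<^sub>v n" and maz: "- a = 0\<^sub>v n" by auto
  have "a = - (- a)" by simp
  hence az: "a = 0\<^sub>v n" unfolding maz by simp
  hence "zp = 0\<^sub>v (n+n)" unfolding zab az bz by (intro eq_vecI, auto)
  hence zD: "z \<in> ?D" using zz zn znc by simp
  have "vec_first z n = 0\<^sub>v n" unfolding z_def by (rule vec_first_append, auto)
  hence "z = 0\<^sub>v (n+n)" by (rule top_zero[OF A F G stable M_def zD])
  hence "vec_last z n = vec_last (0\<^sub>v (n+n)) n" by simp
  hence "x = 0\<^sub>v n" unfolding z_def using vec_last_append[of "0\<^sub>v n" n x n] x by simp
  thus ?thesis unfolding ux by (intro eq_vecI, auto)
qed

end

(* ---- part P13 ---- *)


lemma inv_exists: assumes A: "(A :: complex mat) \<in> carrier_mat n n" and d: "det A \<noteq> 0"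
  shows "\<exists>B. B \<in> carrier_mat n n \<and> B * A = 1\<^sub>m n"
  using det_non_zero_imp_unit[OF A d, of undefined] unfolding Units_def ring_mat_def by auto

lemma vec_norm2_ip: "vec_norm2 v = sqrt (Re (ip v v))"
  unfolding vec_norm2_def ip_self_Re by (simp add: atLeast0LessThan)

lemma norm_bound: assumes B: "(B :: complex mat) \<in> carrier_mat N N"
  shows "\<exists>K \<ge> 1. \<forall>w \<in> carrier_vec N. Re (ip (B *\<^sub>v w) (B *\<^sub>v w)) \<le> K * Re (ip w w)"
proof -
  define r where "r i = (\<Sum>j = 0..<N. cmod (B $$ (i,j)))" for i
  define K where "K = 1 + (\<Sum>i = 0..<N. (r i)^2)"
  have K1: "K \<ge> 1" unfolding K_def by (auto intro: sum_nonneg)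
  show ?thesis
  proof (intro exI[of _ K] conjI K1 ballI)
    fix w :: "complex vec" assume w: "w \<in> carrier_vec N"
    define S where "S = (\<Sum>k = 0..<N. (cmod (w $ k))^2)"
    have S0: "0 \<le> S" unfolding S_def by (auto intro: sum_nonneg)
    have wS: "Re (ip w w) = S" unfolding ip_self_Re S_def using w by simp
    have wj: "\<And>j. j < N \<Longrightarrow> cmod (w $ j) \<le> sqrt S"
    proof -
      fix j assume j: "j < N"
      have "(cmod (w $ j))^2 \<le> S" unfolding S_def 
        by (rule member_le_sum[of j "{0..<N}" "\<lambda>k. (cmod (w $ k))^2"], insert j, auto)
      thus "cmod (w $ j) \<le> sqrt S" by (simp add: real_le_rsqrt)
    qed
    have comp: "\<And>i. i < N \<Longrightarrow> (cmod ((B *\<^sub>v w) $ i))^2 \<le> (r i)^2 * S"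
    proof -
      fix i assume i: "i < N"
      have "(B *\<^sub>v w) $ i = (\<Sum>j = 0..<N. B $$ (i,j) * w $ j)" using B w i by (simp add: scalar_prod_def)
      hence "cmod ((B *\<^sub>v w) $ i) \<le> (\<Sum>j = 0..<N. cmod (B $$ (i,j)) * cmod (w $ j))"
        by (metis (no_types, lifting) norm_mult norm_sum sum.cong)
      also have "\<dots> \<le> (\<Sum>j = 0..<N. cmod (B $$ (i,j)) * sqrt S)"
        by (rule sum_mono, rule mult_left_mono, insert wj, auto)
      also have "\<dots> = r i * sqrt S" unfolding r_def by (simp add: sum_distrib_right)
      finally have le: "cmod ((B *\<^sub>v w) $ i) \<le> r i * sqrt S" .
      have "(cmod ((B *\<^sub>v w) $ i))^2 \<le> (r i * sqrt S)^2" by (rule power_mono[OF le], auto)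
      also have "\<dots> = (r i)^2 * S" using S0 by (simp add: power_mult_distrib)
      finally show "(cmod ((B *\<^sub>v w) $ i))^2 \<le> (r i)^2 * S" .
    qed
    have "Re (ip (B *\<^sub>v w) (B *\<^sub>v w)) = (\<Sum>i = 0..<N. (cmod ((B *\<^sub>v w) $ i))^2)"
      unfolding ip_self_Re using B by simp
    also have "\<dots> \<le> (\<Sum>i = 0..<N. (r i)^2 * S)" by (rule sum_mono, rule comp, auto)
    also have "\<dots> = (\<Sum>i = 0..<N. (r i)^2) * S" by (simp add: sum_distrib_right)
    also have "\<dots> \<le> K * S" unfolding K_def using S0 by (simp add: mult_right_mono)
    finally show "Re (ip (B *\<^sub>v w) (B *\<^sub>v w)) \<le> K * Re (ip w w)" unfolding wS .
  qed
qed

lemma proj_fix: assumes P: "is_orth_proj N S P" and x: "x \<in> S" shows "P *\<^sub>v x = x"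
proof -
  have Pc: "P \<in> carrier_mat N N" and PP: "P * P = P" and r: "mat_range P = S" using P unfolding is_orth_proj_def by auto
  from x r obtain u where u: "u \<in> carrier_vec N" and xu: "x = P *\<^sub>v u" unfolding mat_range_def using Pc by auto
  show ?thesis unfolding xu using Pc u PP by (metis assoc_mult_mat_vec)
qed

lemma proj_range: assumes P: "is_orth_proj N S P" and v: "v \<in> carrier_vec N" shows "P *\<^sub>v v \<in> S"
  using P v unfolding is_orth_proj_def mat_range_def by auto

lemma proj_unique: assumes P: "is_orth_proj N S P" and Q: "is_orth_proj N S Q" shows "P = Q"
proof -
  have Pc: "P \<in> carrier_mat N N" and Pa: "mat_adjoint P = P" using P unfolding is_orth_proj_def by auto
  have Qc: "Q \<in> carrier_mat N N" and Qa: "mat_adjoint Q = Q" using Q unfolding is_orth_proj_def by auto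
  have PQ: "P * Q = Q"
    by (rule mat_eq_by_vec[of _ N], insert Pc Qc, auto simp: assoc_mult_mat_vec[of _ N N _ N] 
       proj_fix[OF P proj_range[OF Q]])
  have QP: "Q * P = P"
    by (rule mat_eq_by_vec[of _ N], insert Pc Qc, auto simp: assoc_mult_mat_vec[of _ N N _ N] 
       proj_fix[OF Q proj_range[OF P]])
  have "Q = mat_adjoint (P * Q)" unfolding PQ Qa ..
  also have "\<dots> = Q * P" using adj_mult[OF Pc Qc] Pa Qa by simp
  finally show ?thesis unfolding QP by simp
qed

lemma orth_proj_eq: "is_orth_proj N S P \<Longrightarrow> orth_proj N S = P"
  unfolding orth_proj_def using proj_unique by blast


(* ---- part P14 ---- *)


lemma norm_identity: assumes P1: "is_orth_proj N S1 P1" and P2: "is_orth_proj N S2 P2" and v: "v \<in> carrier_vec N"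
  shows "ip ((P1 - P2) *\<^sub>v v) ((P1 - P2) *\<^sub>v v) + ip ((1\<^sub>m N - P1 - P2) *\<^sub>v v) ((1\<^sub>m N - P1 - P2) *\<^sub>v v) = ip v v"
proof -
  have P1c: "P1 \<in> carrier_mat N N" and P1a: "mat_adjoint P1 = P1" using P1 unfolding is_orth_proj_def by auto
  have P2c: "P2 \<in> carrier_mat N N" and P2a: "mat_adjoint P2 = P2" using P2 unfolding is_orth_proj_def by auto
  define p where "p = P1 *\<^sub>v v" define q where "q = P2 *\<^sub>v v"
  have pc: "p \<in> carrier_vec N" and qc: "q \<in> carrier_vec N" unfolding p_def q_def using P1c P2c v by auto
  have X: "(P1 - P2) *\<^sub>v v = p - q" unfolding p_def q_def using P1c P2c v by (simp add: minus_mult_distrib_mat_vec)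
  have Q1: "(1\<^sub>m N - P1 - P2) *\<^sub>v v = (1\<^sub>m N - P1) *\<^sub>v v - P2 *\<^sub>v v"
    by (rule minus_mult_distrib_mat_vec, insert P1c P2c v, auto)
  have Q2: "(1\<^sub>m N - P1) *\<^sub>v v = 1\<^sub>m N *\<^sub>v v - P1 *\<^sub>v v"
    by (rule minus_mult_distrib_mat_vec, insert P1c P2c v, auto)
  have Q: "(1\<^sub>m N - P1 - P2) *\<^sub>v v = v - p - q" unfolding Q1 Q2 p_def q_def using v by simp
  have Pp: "P1 *\<^sub>v p = p" unfolding p_def by (rule proj_fix[OF P1 proj_range[OF P1 v]])
  have Pq: "P2 *\<^sub>v q = q" unfolding q_def by (rule proj_fix[OF P2 proj_range[OF P2 v]])
  have vp: "ip v p = ip p p" 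
  proof -
    have "ip v p = ip v (P1 *\<^sub>v p)" unfolding Pp ..
    also have "\<dots> = ip (P1 *\<^sub>v v) p" using ip_adj[OF P1c v pc] P1a by simp
    finally show ?thesis unfolding p_def by simp
  qed

  have vq: "ip v q = ip q q" 
  proof -
    have "ip v q = ip v (P2 *\<^sub>v q)" unfolding Pq ..
    also have "\<dots> = ip (P2 *\<^sub>v v) q" using ip_adj[OF P2c v qc] P2a by simp
    finally show ?thesis unfolding q_def by simp
  qed
  have pv: "ip p v = ip p p" using ip_adj[OF P1c v v] P1a vp unfolding p_def by simp
  have qv: "ip q v = ip q q" using ip_adj[OF P2c v v] P2a vq unfolding q_def by simp
  have vpc: "v - p \<in> carrier_vec N" using v pc by auto
  have e1: "ip (p - q) (p - q) = ip p p - ip p q - ip q p + ip q q"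
    using pc qc by (simp add: ip_minus_left[of _ N] ip_minus_right[of _ N])
  have e2: "ip (v - p - q) (v - p - q) = ip v v - ip v p - ip v q - ip p v + ip p p + ip p q - ip q v + ip q p + ip q q"
    using pc qc v vpc by (simp add: ip_minus_left[of _ N] ip_minus_right[of _ N] algebra_simps)
  show ?thesis unfolding X Q e1 e2 vp pv vq qv by (simp add: algebra_simps)
qed

lemma main_norm: assumes P1: "is_orth_proj N S1 P1" and P2: "is_orth_proj N S2 P2"
  and inj: "\<And>v. v \<in> carrier_vec N \<Longrightarrow> (1\<^sub>m N - P1 - P2) *\<^sub>v v = 0\<^sub>v N \<Longrightarrow> v = 0\<^sub>v N"
  shows "spec_norm (P1 - P2) < 1"
proof -
  have P1c: "P1 \<in> carrier_mat N N" using P1 unfolding is_orth_proj_def by auto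
  have P2c: "P2 \<in> carrier_mat N N" using P2 unfolding is_orth_proj_def by auto
  let ?Q = "1\<^sub>m N - P1 - P2"
  have Qc: "?Q \<in> carrier_mat N N" using P1c P2c by auto
  have "det ?Q \<noteq> 0" unfolding det_0_iff_vec_prod_zero[OF Qc] using inj by auto
  from inv_exists[OF Qc this] obtain B where Bc: "B \<in> carrier_mat N N" and BQ: "B * ?Q = 1\<^sub>m N" by auto
  from norm_bound[OF Bc] obtain K where K1: "K \<ge> 1" and Kb: "\<forall>w \<in> carrier_vec N. Re (ip (B *\<^sub>v w) (B *\<^sub>v w)) \<le> K * Re (ip w w)" by auto
  define c where "c = sqrt (1 - 1 / K)"
  have c1: "c < 1" unfolding c_def using K1 by (simp add: real_sqrt_lt_1_iff)
  have bound: "\<And>v. v \<in> carrier_vec N \<Longrightarrow> vec_norm2 v \<le> 1 \<Longrightarrow> vec_norm2 ((P1 - P2) *\<^sub>v v) \<le> c"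
  proof -
    fix v :: "complex vec" assume v: "v \<in> carrier_vec N" and vn: "vec_norm2 v \<le> 1"
    have Qv: "?Q *\<^sub>v v \<in> carrier_vec N" using Qc v by auto
    have "B *\<^sub>v (?Q *\<^sub>v v) = v" using BQ Bc Qc v by (simp add: assoc_mult_mat_vec[symmetric, of _ N N _ N])
    hence vQ: "Re (ip v v) \<le> K * Re (ip (?Q *\<^sub>v v) (?Q *\<^sub>v v))" using Kb Qv by metis
    have id: "Re (ip ((P1 - P2) *\<^sub>v v) ((P1 - P2) *\<^sub>v v)) = Re (ip v v) - Re (ip (?Q *\<^sub>v v) (?Q *\<^sub>v v))"
      using arg_cong[OF norm_identity[OF P1 P2 v], of Re] by simp
    have vv1: "Re (ip v v) \<le> 1" using vn unfolding vec_norm2_ip by (simp add: real_sqrt_le_1_iff)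
    have vv0: "0 \<le> Re (ip v v)" unfolding ip_self_Re by (auto intro: sum_nonneg)
    have "Re (ip ((P1 - P2) *\<^sub>v v) ((P1 - P2) *\<^sub>v v)) \<le> Re (ip v v) - Re (ip v v) / K"
      unfolding id using vQ K1 by (simp add: field_simps)
    also have "\<dots> = (1 - 1 / K) * Re (ip v v)" by (simp add: field_simps)
    also have "\<dots> \<le> 1 - 1 / K" using vv1 vv0 K1 by (simp add: mult_left_le)
    finally show "vec_norm2 ((P1 - P2) *\<^sub>v v) \<le> c" unfolding vec_norm2_ip c_def by simp
  qed
  have "spec_norm (P1 - P2) \<le> c" unfolding spec_norm_def
  proof (rule cSup_least)
    show "{vec_norm2 ((P1 - P2) *\<^sub>v v) |v. v \<in> carrier_vec (dim_col (P1 - P2)) \<and> vec_norm2 v \<le> 1} \<noteq> {}"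
      by (intro ex_in_conv[THEN iffD1] exI[of _ "vec_norm2 ((P1 - P2) *\<^sub>v 0\<^sub>v N)"], 
          insert P1c P2c, auto intro!: exI[of _ "0\<^sub>v N"] simp: vec_norm2_def)
    fix x assume "x \<in> {vec_norm2 ((P1 - P2) *\<^sub>v v) |v. v \<in> carrier_vec (dim_col (P1 - P2)) \<and> vec_norm2 v \<le> 1}"
    thus "x \<le> c" using bound P1c P2c by auto
  qed
  thus ?thesis using c1 by simp
qed


(* ---- part P15 ---- *)


lemma vec_eq_sum: assumes v: "(v::complex vec) \<in> carrier_vec N" and p: "p \<in> carrier_vec N" and q: "q \<in> carrier_vec N"
  and e: "v - p - q = 0\<^sub>v N" shows "v = p + q"
proof (rule eq_vecI)
  fix i assume "i < dim_vec (p + q)"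
  hence i: "i < N" using q by simp
  have "(v - p - q) $ i = 0" unfolding e using i by simp
  hence "v $ i - p $ i - q $ i = 0" using i v p q by simp
  hence "v $ i = p $ i + q $ i" by (simp add: algebra_simps)
  thus "v $ i = (p + q) $ i" using i q by simp
qed (insert v p q, auto)

lemma vec_eq_cancel: assumes x: "(x::complex vec) \<in> carrier_vec N" and q: "q \<in> carrier_vec N"
  and e: "q = x + q" shows "x = 0\<^sub>v N"
proof (rule eq_vecI)
  fix i assume "i < dim_vec (0\<^sub>v N :: complex vec)"
  hence i: "i < N" by simp
  have "q $ i = (x + q) $ i" using e by simp
  hence "q $ i = x $ i + q $ i" using i q by simp
  thus "x $ i = 0\<^sub>v N $ i" using i by simp
qed (insert x, auto)

definition E2 :: "nat \<Rightarrow> complex mat" where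
  "E2 n = mat (n+n) (n+n) (\<lambda>(i,j). if i = j \<and> i < n then 1 else 0)"

lemma E2_carrier: "E2 n \<in> carrier_mat (n+n) (n+n)" unfolding E2_def by auto

lemma E2_vec: "v \<in> carrier_vec (n+n) \<Longrightarrow> E2 n *\<^sub>v v = vec (n+n) (\<lambda>i. if i < n then v $ i else 0)"
  unfolding E2_def by (intro eq_vecI, auto simp: scalar_prod_def if_distrib if_distribR cong: if_cong)

lemma E2_proj: "is_orth_proj (n+n) (mat_range (top_id n)) (E2 n)"
proof -
  have c: "E2 n \<in> carrier_mat (n+n) (n+n)" by (rule E2_carrier)
  have idem: "E2 n * E2 n = E2 n"
    by (rule mat_eq_by_vec[of _ "n+n"], insert c, auto simp: assoc_mult_mat_vec[of _ "n+n" "n+n" _ "n+n"] E2_vec)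
  have adj: "mat_adjoint (E2 n) = E2 n" unfolding E2_def by (intro eq_matI, auto)
  have top: "\<And>x. x \<in> carrier_vec n \<Longrightarrow> top_id n *\<^sub>v x = vec (n+n) (\<lambda>i. if i < n then x $ i else 0)"
    unfolding top_id_def by (intro eq_vecI, auto simp: scalar_prod_def if_distrib if_distribR cong: if_cong)
  have range: "mat_range (E2 n) = mat_range (top_id n)"
  proof
    show "mat_range (E2 n) \<subseteq> mat_range (top_id n)"
    proof
      fix w assume "w \<in> mat_range (E2 n)"
      then obtain v where v: "v \<in> carrier_vec (n+n)" and w: "w = E2 n *\<^sub>v v" unfolding mat_range_def using c by auto
      have x: "vec_first v n \<in> carrier_vec n" by auto
      have "w = top_id n *\<^sub>v vec_first v n" unfolding w E2_vec[OF v] top[OF x] 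
        by (intro eq_vecI, auto simp: vec_first_def)
      thus "w \<in> mat_range (top_id n)" unfolding mat_range_def top_id_def using x by auto
    qed
    show "mat_range (top_id n) \<subseteq> mat_range (E2 n)"
    proof
      fix w assume "w \<in> mat_range (top_id n)"
      then obtain x where x: "x \<in> carrier_vec n" and w: "w = top_id n *\<^sub>v x" unfolding mat_range_def top_id_def by auto
      have v: "x @\<^sub>v 0\<^sub>v n \<in> carrier_vec (n+n)" using x by auto
      have "w = E2 n *\<^sub>v (x @\<^sub>v 0\<^sub>v n)" unfolding w E2_vec[OF v] top[OF x] using x
        by (intro eq_vecI, auto)
      thus "w \<in> mat_range (E2 n)" unfolding mat_range_def using v c by auto
    qed
  qed
  show ?thesis unfolding is_orth_proj_def using c idem adj range by auto
qed

theorem proposition4p2: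
  fixes n :: nat and A F G :: "complex mat"
  assumes A: "A \<in> carrier_mat n n"
    and F: "psd_mat n F"
    and G: "psd_mat n G"
    and standing_neg: "num_eigs (hamiltonian A F G) (\<lambda>z. Re z < 0) = n"
    and standing_pos: "num_eigs (hamiltonian A F G) (\<lambda>z. Re z > 0) = n"
    and stable: "stable_mat A"
  shows "subspace_dist (2 * n) (D_neg (2 * n) (mat_adjoint (hamiltonian A F G)))
           (mat_range (top_id n)) < 1"
proof -
  have N2: "2 * n = n + n" by simp
  define M where "M = mat_adjoint (hamiltonian A F G)"
  have Fh: "hermitian_mat n F" and Gh: "hermitian_mat n G" using F G unfolding psd_mat_def by auto
  have H: "hamiltonian A F G \<in> carrier_mat (n+n) (n+n)" by (rule H_carrier[OF A Fh Gh])
  have Mc: "M \<in> carrier_mat (n+n) (n+n)" unfolding M_def using H by auto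
  have noimag: "\<And>z. eigenvalue M z \<Longrightarrow> Re z \<noteq> 0"
  proof -
    fix z assume "eigenvalue M z"
    hence "eigenvalue (hamiltonian A F G) (cnj z)" unfolding M_def by (rule eigenvalue_adj[OF H])
    from no_imag_eig[OF H standing_neg standing_pos this] show "Re z \<noteq> 0" by simp
  qed
  let ?D = "spectral_subspace (n+n) M (\<lambda>z. Re z < 0)"
  from D_lspan[OF Mc noimag] obtain L where Lc: "set L \<subseteq> carrier_vec (n+n)" and DL: "?D = lspan (n+n) L" by auto
  from proj_exists[OF Lc] obtain P1 where P1: "is_orth_proj (n+n) ?D P1" unfolding DL by auto
  note P2 = E2_proj[of n]
  have P1c: "P1 \<in> carrier_mat (n+n) (n+n)" and P1a: "mat_adjoint P1 = P1" using P1 unfolding is_orth_proj_def by auto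
  have P2c: "E2 n \<in> carrier_mat (n+n) (n+n)" by (rule E2_carrier)
  have inj: "\<And>v. v \<in> carrier_vec (n+n) \<Longrightarrow> (1\<^sub>m (n+n) - P1 - E2 n) *\<^sub>v v = 0\<^sub>v (n+n) \<Longrightarrow> v = 0\<^sub>v (n+n)"
  proof -
    fix v :: "complex vec" assume v: "v \<in> carrier_vec (n+n)" and Q0: "(1\<^sub>m (n+n) - P1 - E2 n) *\<^sub>v v = 0\<^sub>v (n+n)"
    define p where "p = P1 *\<^sub>v v" define q where "q = E2 n *\<^sub>v v"
    have pc: "p \<in> carrier_vec (n+n)" and qc: "q \<in> carrier_vec (n+n)" unfolding p_def q_def using P1c P2c v by auto
    have Q1: "(1\<^sub>m (n+n) - P1 - E2 n) *\<^sub>v v = (1\<^sub>m (n+n) - P1) *\<^sub>v v - E2 n *\<^sub>v v"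
      by (rule minus_mult_distrib_mat_vec, insert P1c P2c v, auto)
    have Q2: "(1\<^sub>m (n+n) - P1) *\<^sub>v v = 1\<^sub>m (n+n) *\<^sub>v v - P1 *\<^sub>v v"
      by (rule minus_mult_distrib_mat_vec, insert P1c P2c v, auto)
    have "v - p - q = 0\<^sub>v (n+n)" using Q0 unfolding Q1 Q2 p_def q_def using v by simp
    hence vpq: "v = p + q" by (rule vec_eq_sum[OF v pc qc])
    have pD: "p \<in> ?D" unfolding p_def by (rule proj_range[OF P1 v])
    have qR: "q \<in> mat_range (top_id n)" unfolding q_def by (rule proj_range[OF P2 v])
    have Pp: "P1 *\<^sub>v p = p" by (rule proj_fix[OF P1 pD])
    have Eq: "E2 n *\<^sub>v q = q" by (rule proj_fix[OF P2 qR])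
    have "q = E2 n *\<^sub>v p + q" unfolding q_def[symmetric] 
      using arg_cong[OF vpq, of "\<lambda>x. E2 n *\<^sub>v x"] Eq q_def P2c pc qc
      by (simp add: mult_add_distrib_mat_vec[of _ "n+n" "n+n"])
    hence Ep: "E2 n *\<^sub>v p = 0\<^sub>v (n+n)" by (rule vec_eq_cancel[OF mult_mat_vec_carrier[OF P2c pc] qc])
    have "vec_first p n = 0\<^sub>v n"
    proof (rule eq_vecI)
      fix i assume "i < dim_vec (0\<^sub>v n :: complex vec)"
      hence i: "i < n" by simp
      have "(E2 n *\<^sub>v p) $ i = 0" unfolding Ep using i by simp
      thus "vec_first p n $ i = 0\<^sub>v n $ i" unfolding E2_vec[OF pc] using i by (simp add: vec_first_def)
    qed simp
    hence p0: "p = 0\<^sub>v (n+n)" by (rule top_zero[OF A F G stable M_def pD])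
    have "p = P1 *\<^sub>v p + P1 *\<^sub>v q" unfolding p_def using arg_cong[OF vpq, of "\<lambda>x. P1 *\<^sub>v x"] P1c pc qc
      by (simp add: mult_add_distrib_mat_vec[of _ "n+n" "n+n"] p_def[symmetric])
    hence P1q: "P1 *\<^sub>v q = 0\<^sub>v (n+n)" unfolding p0 using P1c mult_mat_vec_carrier[OF P1c qc] by simp
    have ql: "vec_last q n = 0\<^sub>v n"
    proof (rule eq_vecI)
      fix i assume "i < dim_vec (0\<^sub>v n :: complex vec)"
      hence i: "i < n" by simp
      show "vec_last q n $ i = 0\<^sub>v n $ i" unfolding q_def E2_vec[OF v] using i by (simp add: vec_last_def)
    qed simp
    have orth: "\<And>d. d \<in> ?D \<Longrightarrow> ip d q = 0"
    proof -
      fix d assume d: "d \<in> ?D"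
      have dc: "d \<in> carrier_vec (n+n)" using ss_carrier[OF Mc d] .
      have "ip d q = ip (P1 *\<^sub>v d) q" unfolding proj_fix[OF P1 d] ..
      also have "\<dots> = ip d (P1 *\<^sub>v q)" using ip_adj[OF P1c dc qc] P1a by simp
      also have "\<dots> = 0" unfolding P1q using dc by simp
      finally show "ip d q = 0" .
    qed
    have "q = 0\<^sub>v (n+n)" by (rule bot_zero[OF A F G stable M_def noimag qc ql orth])
    thus "v = 0\<^sub>v (n+n)" unfolding vpq p0 using qc by simp
  qed
  have "spec_norm (P1 - E2 n) < 1" by (rule main_norm[OF P1 P2 inj])
  moreover have "orth_proj (n+n) ?D = P1" by (rule orth_proj_eq[OF P1])
  moreover have "orth_proj (n+n) (mat_range (top_id n)) = E2 n" by (rule orth_proj_eq[OF P2])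
  ultimately show ?thesis unfolding subspace_dist_def D_neg_def N2 M_def[symmetric] by simp
qed


end
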